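(* Let $(X,.)$ be an $n$-space and $\mu\colon\mathcal{B}(X)\to\mathbb{R}_+$ a regular (finite, nonnegative) Borel measure. For any $f\in\mathcal{B}C^*(X,.)$ and $\varepsilon>0$ there exists $g\in C^*(X,.)$ such that $\sup_{x\in X}\|g(x)\|\leq\sup_{x\in X}\|f(x)\|$ and $\int_X\|f(x)-g(x)\|\,d\mu(x)<\varepsilon$.
   Context: $M_n$ = complex $n\times n$ matrices with operator norm, $\mathbb{U}_n=\mathcal{U}_n/(\mathbb{T}I)$ ($\mathcal{U}_n$ the unitary group), $\mathfrak{u}.A=UAU^{-1}$. An $n$-space is a locally compact Hausdorff space $X$ with a continuous free action of $\mathbb{U}_n$; $\mathcal{B}(X)$ is its Borel $\sigma$-algebra. $C^*(X,.)$: continuous $f\colon X\to M_n$ vanishing at infinity with $f(\mathfrak{u}.x)=\mathfrak{u}.f(x)$; $\mathcal{B}C^*(X,.)$: bounded Borel $f\colon X\to M_n$ with the same equivariance. *)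

theory Defs
  imports "HOL-Analysis.Analysis"
begin

text \<open>Matrices in M_n are represented as complex^'n^'n, with n = CARD('n).\<close>

definition cadj :: "complex^'n^'n \<Rightarrow> complex^'n^'n" where
  "cadj A = (\<chi> i j. cnj (A $ j $ i))"

definition unitary_mat :: "complex^'n^'n \<Rightarrow> bool" where
  "unitary_mat U \<longleftrightarrow> U ** cadj U = mat 1 \<and> cadj U ** U = mat 1"

definition opnorm :: "complex^'n^'n \<Rightarrow> real" where
  "opnorm A = onorm (\<lambda>x. A *v x)"

text \<open>Action of the projective unitary group U_n/(T I), given as an action of
  U_n on which the scalar unitaries act trivially; freeness of the PU_n-action
  means that only scalar unitaries have fixed points; continuity of the
  PU_n-action is equivalent to continuity of the lifted U_n-action.\<close>
definition n_space_action :: "(complex^'n^'n \<Rightarrow> 'a::topological_space \<Rightarrow> 'a) \<Rightarrow> bool" where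
  "n_space_action act \<longleftrightarrow>
     (\<forall>x. act (mat 1) x = x) \<and>
     (\<forall>U V x. unitary_mat U \<longrightarrow> unitary_mat V \<longrightarrow> act (U ** V) x = act U (act V x)) \<and>
     (\<forall>c x. norm c = 1 \<longrightarrow> act (mat c) x = x) \<and>
     (\<forall>U x. unitary_mat U \<longrightarrow> act U x = x \<longrightarrow> (\<exists>c. norm c = 1 \<and> U = mat c)) \<and>
     continuous_on ({U. unitary_mat U} \<times> UNIV) (\<lambda>(U, x). act U x)"

definition equivariant :: "(complex^'n^'n \<Rightarrow> 'a \<Rightarrow> 'a) \<Rightarrow> ('a \<Rightarrow> complex^'n^'n) \<Rightarrow> bool" where
  "equivariant act f \<longleftrightarrow>
     (\<forall>U x. unitary_mat U \<longrightarrow> f (act U x) = U ** f x ** cadj U)"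

definition Cstar :: "(complex^'n^'n \<Rightarrow> 'a::topological_space \<Rightarrow> 'a) \<Rightarrow> ('a \<Rightarrow> complex^'n^'n) set" where
  "Cstar act = {g. continuous_on UNIV g \<and> equivariant act g \<and>
     (\<forall>e>0. \<exists>K. compact K \<and> (\<forall>x. x \<notin> K \<longrightarrow> opnorm (g x) < e))}"

definition BCstar :: "(complex^'n^'n \<Rightarrow> 'a::topological_space \<Rightarrow> 'a) \<Rightarrow> ('a \<Rightarrow> complex^'n^'n) set" where
  "BCstar act = {f. f \<in> borel_measurable borel \<and> bounded (range f) \<and> equivariant act f}"

definition regular_borel_measure :: "'a::topological_space measure \<Rightarrow> bool" where
  "regular_borel_measure M \<longleftrightarrow> sets M = sets borel \<and> finite_measure M \<and>
     (\<forall>A \<in> sets borel.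
        emeasure M A = (SUP K \<in> {K. K \<subseteq> A \<and> compact K}. emeasure M K) \<and>
        emeasure M A = (INF U \<in> {U. A \<subseteq> U \<and> open U}. emeasure M U))"

end

theory Submission
  imports Defs
begin

type_synonym 'n cmat = "complex^'n^'n"

definition cinner :: "complex^'n \<Rightarrow> complex^'n \<Rightarrow> complex" where
  "cinner x y = (\<Sum>i\<in>UNIV. cnj (x$i) * y$i)"

lemma cadj_nth[simp]: "cadj A $ i $ j = cnj (A $ j $ i)"
  by (simp add: cadj_def)

lemma cadj_cadj[simp]: "cadj (cadj A) = A"
  by (simp add: vec_eq_iff)

lemma cadj_mult: "cadj (A ** B) = cadj B ** cadj A"
  by (simp add: vec_eq_iff matrix_matrix_mult_def mult.commute)

lemma cadj_mat[simp]: "cadj (mat c) = mat (cnj c)"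
  by (simp add: vec_eq_iff mat_def)

lemma unitary_mat_left: "unitary_mat U \<longleftrightarrow> cadj U ** U = mat 1"
  unfolding unitary_mat_def using matrix_left_right_inverse by blast

lemma unitary_mat_right: "unitary_mat U \<longleftrightarrow> U ** cadj U = mat 1"
  unfolding unitary_mat_def using matrix_left_right_inverse by blast

lemma unitary_cadj: "unitary_mat U \<Longrightarrow> unitary_mat (cadj U)"
  unfolding unitary_mat_def by simp

lemma unitary_mult: "unitary_mat U \<Longrightarrow> unitary_mat V \<Longrightarrow> unitary_mat (U ** V)"
  unfolding unitary_mat_left cadj_mult
  by (metis matrix_mul_assoc matrix_mul_lid)

lemma unitary_one: "unitary_mat (mat 1)"
  by (simp add: unitary_mat_def)

lemma cinner_self: "cinner x x = of_real ((norm x)^2)"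
proof -
  have "(norm x)^2 = (\<Sum>i\<in>UNIV. (norm (x$i))^2)"
    by (simp add: norm_vec_def L2_set_def sum_nonneg)
  have "\<And>i. cnj (x$i) * x$i = of_real ((norm (x$i))^2)"
    by (metis complex_norm_square mult.commute)
  then have "cinner x x = (\<Sum>i\<in>UNIV. of_real ((norm (x$i))^2))"
    by (simp add: cinner_def)
  also have "\<dots> = of_real ((norm x)^2)"
    using \<open>(norm x)^2 = _\<close> by simp
  finally show ?thesis .
qed

lemma cinner_mat: "cinner (A *v x) y = cinner x (cadj A *v y)"
proof -
  have "cinner (A *v x) y = (\<Sum>i\<in>UNIV. \<Sum>j\<in>UNIV. cnj (A$i$j) * cnj (x$j) * y$i)"
    unfolding cinner_def matrix_vector_mult_def by (simp add: sum_distrib_right)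
  also have "\<dots> = (\<Sum>j\<in>UNIV. \<Sum>i\<in>UNIV. cnj (A$i$j) * cnj (x$j) * y$i)"
    by (rule sum.swap)
  also have "\<dots> = cinner x (cadj A *v y)"
    unfolding cinner_def matrix_vector_mult_def by (simp add: sum_distrib_left mult_ac)
  finally show ?thesis .
qed

lemma norm_unitary_vec:
  assumes "unitary_mat U" shows "norm (U *v x) = norm x"
proof -
  have "cinner (U *v x) (U *v x) = cinner x x"
    using assms by (simp add: cinner_mat matrix_vector_mul_assoc unitary_mat_left)
  then have "complex_of_real ((norm (U *v x))^2) = complex_of_real ((norm x)^2)"
    by (simp only: cinner_self)
  then have "(norm (U *v x))^2 = (norm x)^2"
    by (simp only: of_real_eq_iff)
  then show ?thesis by (simp add: power2_eq_iff_nonneg)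
qed

lemma opnorm_bl: "bounded_linear (\<lambda>x. (A::complex^'n^'n) *v x)"
  by (rule matrix_vector_mul_bounded_linear)

lemma opnorm_mult_vec: "norm (A *v x) \<le> opnorm A * norm x"
  unfolding opnorm_def using onorm[OF opnorm_bl] by blast

lemma opnorm_nonneg: "0 \<le> opnorm A"
  unfolding opnorm_def using onorm_pos_le[OF opnorm_bl] by blast

lemma opnorm_le: "(\<And>x. norm (A *v x) \<le> b * norm x) \<Longrightarrow> opnorm A \<le> b"
  unfolding opnorm_def by (rule onorm_le) auto

lemma opnorm_add: "opnorm (A + B) \<le> opnorm A + opnorm B"
proof (rule opnorm_le)
  fix x
  have "norm ((A + B) *v x) \<le> norm (A *v x) + norm (B *v x)"
    by (simp add: matrix_vector_mult_add_rdistrib norm_triangle_ineq)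
  also have "\<dots> \<le> opnorm A * norm x + opnorm B * norm x"
    by (intro add_mono opnorm_mult_vec)
  finally show "norm ((A + B) *v x) \<le> (opnorm A + opnorm B) * norm x"
    by (simp add: distrib_right)
qed

lemma opnorm_minus: "opnorm (- A) = opnorm A"
proof -
  have "(\<lambda>x. (- A) *v x) = (\<lambda>x. - (A *v x))"
    by (simp add: vec_eq_iff matrix_vector_mult_def sum_negf fun_eq_iff)
  then show ?thesis unfolding opnorm_def by (simp add: onorm_neg)
qed

lemma opnorm_diff: "opnorm (A - B) \<le> opnorm A + opnorm B"
  using opnorm_add[of A "- B"] by (simp add: opnorm_minus)

lemma opnorm_diff_abs: "\<bar>opnorm A - opnorm B\<bar> \<le> opnorm (A - B)"
proof -
  have "opnorm A \<le> opnorm B + opnorm (A - B)"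
    using opnorm_add[of B "A - B"] by simp
  moreover have "opnorm B \<le> opnorm A + opnorm (A - B)"
    using opnorm_add[of A "B - A"] opnorm_minus[of "A - B"] by simp
  ultimately show ?thesis by linarith
qed

lemma scaleR_mvec: "(c *\<^sub>R A) *v x = c *\<^sub>R (A *v (x::complex^'n))" for A :: "complex^'n^'n"
  by (simp add: vec_eq_iff matrix_vector_mult_def scaleR_sum_right)

lemma opnorm_scaleR: "opnorm (c *\<^sub>R A) = \<bar>c\<bar> * opnorm A"
  unfolding opnorm_def scaleR_mvec by (rule onorm_scaleR) (rule opnorm_bl)

lemma opnorm_le_norm: "opnorm A \<le> real CARD('n) * real CARD('n) * norm (A::complex^'n^'n)"
proof (rule opnorm_le)
  fix x :: "complex^'n"
  have "norm (A *v x) \<le> (\<Sum>i\<in>UNIV. norm ((A *v x) $ i))"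
    unfolding norm_vec_def by (rule L2_set_le_sum) simp
  also have "\<dots> \<le> (\<Sum>i\<in>(UNIV::'n set). real CARD('n) * (norm A * norm x))"
  proof (rule sum_mono)
    fix i
    have "norm ((A *v x) $ i) \<le> (\<Sum>j\<in>UNIV. norm (A$i$j * x$j))"
      unfolding matrix_vector_mult_def by (simp add: norm_sum)
    also have "\<dots> \<le> (\<Sum>j\<in>(UNIV::'n set). norm A * norm x)"
    proof (rule sum_mono)
      fix j
      have "norm (A$i$j) \<le> norm (A$i)" by (rule Finite_Cartesian_Product.norm_nth_le)
      moreover have "norm (A$i) \<le> norm A" by (rule Finite_Cartesian_Product.norm_nth_le)
      ultimately have "norm (A$i$j) \<le> norm A" by linarith
      then show "norm (A$i$j * x$j) \<le> norm A * norm x"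
        using Finite_Cartesian_Product.norm_nth_le[of x j]
        by (simp add: norm_mult mult_mono)
    qed
    finally show "norm ((A *v x) $ i) \<le> real CARD('n) * (norm A * norm x)" by simp
  qed
  finally show "norm (A *v x) \<le> real CARD('n) * real CARD('n) * norm A * norm x"
    by (simp add: mult_ac)
qed

lemma continuous_on_opnorm: "continuous_on S (opnorm :: complex^'n^'n \<Rightarrow> real)"
proof -
  define C where "C = real CARD('n) * real CARD('n)"
  have C: "C > 0" by (simp add: C_def)
  have "continuous_on UNIV (opnorm :: complex^'n^'n \<Rightarrow> real)"
    unfolding continuous_on_iff
  proof (intro ballI allI impI)
    fix A :: "complex^'n^'n" and e :: real
    assume "e > 0"
    show "\<exists>d>0. \<forall>B\<in>UNIV. dist B A < d \<longrightarrow> dist (opnorm B) (opnorm A) < e"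
    proof (intro exI[of _ "e / C"] conjI ballI impI)
      show "e / C > 0" using \<open>e > 0\<close> C by simp
      fix B :: "complex^'n^'n" assume "dist B A < e / C"
      then have "C * norm (B - A) < e"
        using C by (simp add: dist_norm field_simps)
      moreover have "dist (opnorm B) (opnorm A) \<le> C * norm (B - A)"
        using opnorm_diff_abs[of B A] opnorm_le_norm[of "B - A"] by (simp add: dist_real_def C_def)
      ultimately show "dist (opnorm B) (opnorm A) < e" by linarith
    qed
  qed
  then show ?thesis by (rule continuous_on_subset) simp
qed

lemma opnorm_eq_0: "opnorm A = 0 \<Longrightarrow> A = 0"
proof -
  assume "opnorm A = 0"
  then have "\<And>x. A *v x = 0 *v x"
    using opnorm_mult_vec[of A] by (metis mult_zero_left norm_le_zero_iff matrix_vector_mult_0)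
  then show "A = 0" using matrix_eq by blast
qed

lemma opnorm_conj:
  assumes "unitary_mat U" shows "opnorm (U ** A ** cadj U) = opnorm A"
proof -
  have le: "opnorm (V ** B ** cadj V) \<le> opnorm B" if "unitary_mat V" for V B :: "complex^'n^'n"
  proof (rule opnorm_le)
    fix x
    have "norm ((V ** B ** cadj V) *v x) = norm (B *v (cadj V *v x))"
      using that by (simp add: matrix_vector_mul_assoc[symmetric] norm_unitary_vec)
    also have "\<dots> \<le> opnorm B * norm (cadj V *v x)" by (rule opnorm_mult_vec)
    also have "norm (cadj V *v x) = norm x"
      using that by (simp add: norm_unitary_vec unitary_cadj)
    finally show "norm ((V ** B ** cadj V) *v x) \<le> opnorm B * norm x" .
  qed
  have "A = cadj U ** (U ** A ** cadj U) ** cadj (cadj U)"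
    using assms unfolding unitary_mat_def
    by (simp add: matrix_mul_assoc) (metis matrix_mul_assoc matrix_mul_lid matrix_mul_rid)
  then have "opnorm A \<le> opnorm (U ** A ** cadj U)"
    using le[of "cadj U" "U ** A ** cadj U"] assms unitary_cadj by metis
  with le[OF assms, of A] show ?thesis by linarith
qed

lemma continuous_on_mmult[continuous_intros]:
  fixes F G :: "'b::topological_space \<Rightarrow> complex^'n^'n"
  assumes "continuous_on S F" "continuous_on S G"
  shows "continuous_on S (\<lambda>x. F x ** G x)"
  unfolding matrix_matrix_mult_def
  by (intro continuous_intros assms)

lemma continuous_on_cadj[continuous_intros]:
  fixes F :: "'b::topological_space \<Rightarrow> complex^'n^'n"
  assumes "continuous_on S F"
  shows "continuous_on S (\<lambda>x. cadj (F x))"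
  unfolding cadj_def by (intro continuous_intros assms)

lemma closed_unitary: "closed {U::complex^'n^'n. unitary_mat U}"
  unfolding unitary_mat_def
  by (intro closed_Collect_conj closed_Collect_eq continuous_intros)

lemma norm_row_unitary:
  assumes "unitary_mat U" shows "norm (U $ i) = 1"
proof -
  have "cinner (U$i) (U$i) = (U ** cadj U) $ i $ i"
    by (simp add: cinner_def matrix_matrix_mult_def mult.commute)
  also have "\<dots> = 1" using assms by (simp add: unitary_mat_def mat_def)
  finally have "complex_of_real ((norm (U$i))^2) = complex_of_real 1"
    by (simp add: cinner_self)
  then have "(norm (U$i))^2 = 1" by (simp only: of_real_eq_iff)
  then show ?thesis by (simp add: power2_eq_1_iff) (smt (verit) norm_ge_zero)
qed

lemma norm_unitary_le: "unitary_mat U \<Longrightarrow> norm (U::complex^'n^'n) \<le> real CARD('n)"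
proof -
  assume U: "unitary_mat U"
  have "norm U \<le> (\<Sum>i\<in>UNIV. norm (U $ i))"
    unfolding norm_vec_def by (rule L2_set_le_sum) simp
  also have "\<dots> = real CARD('n)" using norm_row_unitary[OF U] by simp
  finally show ?thesis .
qed

lemma compact_unitary: "compact {U::complex^'n^'n. unitary_mat U}"
proof -
  have "bounded {U::complex^'n^'n. unitary_mat U}"
    unfolding bounded_iff using norm_unitary_le by blast
  then show ?thesis using closed_unitary compact_eq_bounded_closed by blast
qed

definition enum_n :: "nat \<Rightarrow> 'n::finite" where
  "enum_n = (SOME e. bij_betw e {..<CARD('n)} UNIV)"

lemma enum_n_bij: "bij_betw (enum_n :: nat \<Rightarrow> 'n::finite) {..<CARD('n)} UNIV"
proof -
  have "\<exists>e. bij_betw e {..<CARD('n)} (UNIV::'n set)"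
    using ex_bij_betw_nat_finite[of "UNIV::'n set"] by (simp add: atLeast0LessThan)
  then show ?thesis unfolding enum_n_def by (rule someI_ex)
qed

lemma enum_n_inj: "l < CARD('n) \<Longrightarrow> k < CARD('n) \<Longrightarrow> (enum_n l :: 'n::finite) = enum_n k \<longleftrightarrow> l = k"
  using enum_n_bij unfolding bij_betw_def inj_on_def by auto

lemma enum_n_surj: "\<exists>k<CARD('n). (enum_n k :: 'n::finite) = i"
  using enum_n_bij unfolding bij_betw_def by (metis UNIV_I imageE lessThan_iff)

lemma mv_diff: "(M::complex^'n^'n) *v (x - y) = M *v x - M *v y"
  by (simp add: vec_eq_iff matrix_vector_mult_def sum_subtractf right_diff_distrib)

lemma mv_sum: "(M::complex^'n^'n) *v (\<Sum>l\<in>L. f l) = (\<Sum>l\<in>L. M *v f l)"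
proof (cases "finite L")
  case True then show ?thesis
    by (induction L rule: finite_induct) (simp_all add: vec_eq_iff matrix_vector_mult_def sum.distrib distrib_left)
next
  case False then show ?thesis by (simp add: vec_eq_iff matrix_vector_mult_def)
qed

lemma mv_smult: "(M::complex^'n^'n) *v (a *s x) = a *s (M *v x)"
  by (simp add: vec_eq_iff matrix_vector_mult_def sum_distrib_left mult_ac)

lemma mv_scaleR: "(M::complex^'n^'n) *v (a *\<^sub>R x) = a *\<^sub>R (M *v x)"
  by (simp add: vec_eq_iff matrix_vector_mult_def scaleR_sum_right)

lemma mv_axis: "(M::complex^'n^'n) *v axis j 1 = column j M"
  by (simp add: vec_eq_iff matrix_vector_mult_def column_def axis_def if_distrib cong: if_cong)

lemma column_mult: "column j ((V::complex^'n^'n) ** M) = V *v column j M"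
  by (simp add: vec_eq_iff matrix_vector_mult_def column_def matrix_matrix_mult_def)

lemma cinner_unitary: "unitary_mat V \<Longrightarrow> cinner (V *v x) (V *v y) = cinner x y"
  by (simp add: cinner_mat matrix_vector_mul_assoc unitary_mat_left)

lemma cinner_diff_right: "cinner x (y - z) = cinner x y - cinner x z"
  by (simp add: cinner_def sum_subtractf right_diff_distrib)

lemma cinner_sum_right: "cinner x (\<Sum>l\<in>L. f l) = (\<Sum>l\<in>L. cinner x (f l))"
proof (cases "finite L")
  case True then show ?thesis
    by (induction L rule: finite_induct) (simp_all add: cinner_def sum.distrib distrib_left)
next
  case False then show ?thesis by (simp add: cinner_def)
qed

lemma cinner_smult_right: "cinner x (a *s y) = a * cinner x y"
  by (simp add: cinner_def sum_distrib_left mult_ac)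

lemma scaleR_eq_smult: "r *\<^sub>R (y::complex^'n) = complex_of_real r *s y"
proof (rule iffD2[OF vec_eq_iff], rule allI)
  fix i
  have "(r *\<^sub>R y)$i = r *\<^sub>R (y$i)" by simp
  also have "\<dots> = of_real r * y$i" by (rule scaleR_conv_of_real)
  finally show "(r *\<^sub>R y)$i = (complex_of_real r *s y)$i" by simp
qed

lemma cinner_scaleR_right: "cinner x (r *\<^sub>R y) = of_real r * cinner x y"
  by (simp add: scaleR_eq_smult cinner_smult_right)

lemma cinner_commute: "cinner y x = cnj (cinner x y)"
  by (simp add: cinner_def mult.commute)

definition gsw :: "nat \<Rightarrow> complex^'n^'n \<Rightarrow> complex^'n" where
  "gsw k M = column (enum_n k) M -
     (\<Sum>l<k. cinner (column (enum_n l) M) (column (enum_n k) M) *s column (enum_n l) M)"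

definition gs_step :: "nat \<Rightarrow> complex^'n^'n \<Rightarrow> complex^'n^'n" where
  "gs_step k M = (\<chi> i j. if j = enum_n k then (inverse (norm (gsw k M)) *\<^sub>R gsw k M) $ i else M $ i $ j)"

primrec gsk :: "nat \<Rightarrow> complex^'n^'n \<Rightarrow> complex^'n^'n" where
  "gsk 0 M = M"
| "gsk (Suc k) M = gs_step k (gsk k M)"

definition GS :: "complex^'n^'n \<Rightarrow> complex^'n^'n" where
  "GS M = gsk CARD('n) M"

subsection \<open>Equivariance\<close>

lemma gsw_mult:
  assumes "unitary_mat V" shows "gsw k (V ** M) = V *v gsw k M"
  using assms by (simp add: gsw_def column_mult cinner_unitary mv_diff mv_sum mv_smult)

lemma gs_step_mult:
  assumes "unitary_mat V" shows "gs_step k (V ** M) = V ** gs_step k M"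
proof -
  have n: "norm (gsw k (V ** M)) = norm (gsw k M)"
    using assms by (simp add: gsw_mult norm_unitary_vec)
  show ?thesis
    unfolding vec_eq_iff
  proof (intro allI)
    fix i j
    show "gs_step k (V ** M) $ i $ j = (V ** gs_step k M) $ i $ j"
    proof (cases "j = enum_n k")
      case True
      have "gs_step k (V ** M) $ i $ j = (inverse (norm (gsw k M)) *\<^sub>R (V *v gsw k M)) $ i"
        using True n by (simp add: gs_step_def gsw_mult[OF assms])
      also have "\<dots> = (V *v (inverse (norm (gsw k M)) *\<^sub>R gsw k M)) $ i"
        by (simp add: mv_scaleR)
      also have "\<dots> = (V ** gs_step k M) $ i $ j"
        using True by (simp add: gs_step_def matrix_matrix_mult_def matrix_vector_mult_def)
      finally show ?thesis .
    next
      case False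
      then show ?thesis
        by (simp add: gs_step_def matrix_matrix_mult_def)
    qed
  qed
qed

lemma gsk_mult: "unitary_mat V \<Longrightarrow> gsk k (V ** M) = V ** gsk k M"
  by (induction k) (simp_all add: gs_step_mult)

lemma GS_mult: "unitary_mat V \<Longrightarrow> GS (V ** M) = V ** GS M"
  by (simp add: GS_def gsk_mult)

subsection \<open>Unitarity on invertible matrices\<close>

definition ON :: "nat \<Rightarrow> complex^'n^'n \<Rightarrow> bool" where
  "ON k M \<longleftrightarrow> (\<forall>l<k. \<forall>l'<k. cinner (column (enum_n l) M) (column (enum_n l') M) = (if l = l' then 1 else 0))"

lemma invertible_inj:
  fixes E :: "complex^'n^'n"
  assumes "\<And>x. E *v x = 0 \<Longrightarrow> x = 0"
  shows "invertible E"
proof -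
  have "inj ((*v) E)"
  proof (rule injI)
    fix x y assume "E *v x = E *v y"
    then have "E *v (x - y) = 0" by (simp add: mv_diff)
    then show "x = y" using assms[of "x - y"] by simp
  qed
  then show ?thesis
    using matrix_left_invertible_injective invertible_left_inverse by blast
qed

lemma invertible_kernel:
  fixes M :: "complex^'n^'n"
  assumes "invertible M" "M *v z = 0" shows "z = 0"
proof -
  obtain B where "B ** M = mat 1" using assms(1) invertible_left_inverse by blast
  then have "z = B *v (M *v z)" by (simp add: matrix_vector_mul_assoc)
  then show ?thesis using assms(2) by (simp add: matrix_vector_mult_0_right)
qed

lemma gs_step_props:
  fixes M :: "complex^'n^'n"
  assumes k: "k < CARD('n)" and inv: "invertible M" and on: "ON k M"
  shows "invertible (gs_step k M) \<and> ON (Suc k) (gs_step k M)"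
proof -
  let ?e = "enum_n :: nat \<Rightarrow> 'n"
  define c where "c l = cinner (column (?e l) M) (column (?e k) M)" for l
  define w where "w = gsw k M"
  define s where "s = inverse (norm w)"
  define z :: "complex^'n" where "z = axis (?e k) 1 - (\<Sum>l<k. c l *s axis (?e l) 1)"
  have neq: "?e l \<noteq> ?e k" if "l < k" for l
  proof -
    have "(?e l = ?e k) = (l = k)" by (rule enum_n_inj) (use that k in auto)
    then show ?thesis using that by simp
  qed
  have Mz: "M *v z = w"
    by (simp add: z_def w_def gsw_def mv_diff mv_sum mv_smult mv_axis c_def)
  have zk: "z $ ?e k = 1"
  proof -
    have "(\<Sum>l<k. c l *s axis (?e l) 1) $ ?e k = (\<Sum>l<k. (c l *s axis (?e l) (1::complex)) $ ?e k)"
      by (rule sum_component)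
    also have "\<dots> = 0"
      by (rule sum.neutral) (use neq in \<open>fastforce simp: axis_def\<close>)
    finally show ?thesis by (simp add: z_def axis_def)
  qed
  have w0: "w \<noteq> 0"
  proof
    assume "w = 0"
    then have "z = 0" using invertible_kernel[OF inv] Mz by simp
    then show False using zk by simp
  qed
  then have s0: "s \<noteq> 0" by (simp add: s_def)
  define E :: "complex^'n^'n" where
    "E = (\<chi> i j. if j = ?e k then (s *\<^sub>R z) $ i else (mat 1 :: complex^'n^'n) $ i $ j)"
  have step: "gs_step k M = M ** E"
    unfolding vec_eq_iff
  proof (intro allI)
    fix i j
    show "gs_step k M $ i $ j = (M ** E) $ i $ j"
    proof (cases "j = ?e k")
      case True
      have "(M ** E) $ i $ j = (M *v (s *\<^sub>R z)) $ i"
        using True by (simp add: E_def matrix_matrix_mult_def matrix_vector_mult_def)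
      also have "\<dots> = (s *\<^sub>R w) $ i" by (simp add: mv_scaleR Mz)
      finally show ?thesis using True by (simp add: gs_step_def s_def w_def)
    next
      case False
      have "(M ** E) $ i $ j = (\<Sum>l\<in>UNIV. M $ i $ l * (if l = j then 1 else 0))"
        using False by (simp add: E_def matrix_matrix_mult_def mat_def)
      also have "\<dots> = (\<Sum>l\<in>UNIV. if l = j then M $ i $ l else 0)"
        by (rule sum.cong) auto
      also have "\<dots> = M $ i $ j" by simp
      finally show ?thesis using False by (simp add: gs_step_def)
    qed
  qed
  have Ex: "E *v x = (x - x $ ?e k *s axis (?e k) 1) + (complex_of_real s * x $ ?e k) *s z" for x
    unfolding vec_eq_iff
  proof
    fix i
    have "(E *v x) $ i = (\<Sum>j\<in>UNIV. (if j = ?e k then (s *\<^sub>R z) $ i * x $ j else 0)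
                                   + (if j = ?e k then 0 else (if i = j then x $ j else 0)))"
      by (auto simp: E_def matrix_vector_mult_def mat_def intro!: sum.cong)
    also have "\<dots> = (s *\<^sub>R z) $ i * x $ ?e k + (if i = ?e k then 0 else x $ i)"
    proof -
      have a: "(\<Sum>j\<in>UNIV. (if j = ?e k then (s *\<^sub>R z) $ i * x $ j else 0)) = (s *\<^sub>R z) $ i * x $ ?e k"
        by (simp add: sum.delta')
      have b: "(\<Sum>j\<in>UNIV. (if j = ?e k then 0 else (if i = j then x $ j else 0)))
             = (\<Sum>j\<in>UNIV. (if j = i then (if i = ?e k then 0 else x $ i) else 0))"
        by (rule sum.cong) auto
      show ?thesis unfolding sum.distrib a b by (simp add: sum.delta')
    qed
    also have "\<dots> = ((x - x $ ?e k *s axis (?e k) 1) + (complex_of_real s * x $ ?e k) *s z) $ i"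
      by (simp add: axis_def scaleR_eq_smult)
    finally show "(E *v x) $ i = ((x - x $ ?e k *s axis (?e k) 1) + (complex_of_real s * x $ ?e k) *s z) $ i" .
  qed
  have invE: "invertible E"
  proof (rule invertible_inj)
    fix x assume "E *v x = 0"
    then have h: "(x - x $ ?e k *s axis (?e k) 1) + (complex_of_real s * x $ ?e k) *s z = 0"
      by (simp add: Ex)
    have "((x - x $ ?e k *s axis (?e k) 1) + (complex_of_real s * x $ ?e k) *s z) $ ?e k = 0"
      by (subst h) simp
    then have "complex_of_real s * x $ ?e k = 0"
      using zk by (simp add: axis_def)
    then have xk: "x $ ?e k = 0" using s0 by simp
    then show "x = 0" using h by simp
  qed
  have invS: "invertible (gs_step k M)"
    using step invertible_mult[OF inv invE] by simp
  have col: "column j (gs_step k M) = (if j = ?e k then s *\<^sub>R w else column j M)" for j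
    by (simp add: vec_eq_iff column_def gs_step_def s_def w_def)
  have cw: "cinner (column (?e l) M) w = 0" if "l < k" for l
  proof -
    have "cinner (column (?e l) M) w = c l - (\<Sum>l'<k. c l' * cinner (column (?e l) M) (column (?e l') M))"
      by (simp add: w_def gsw_def cinner_diff_right cinner_sum_right cinner_smult_right c_def)
    also have "(\<Sum>l'<k. c l' * cinner (column (?e l) M) (column (?e l') M)) = (\<Sum>l'<k. if l' = l then c l' else 0)"
      by (rule sum.cong) (use on that in \<open>auto simp: ON_def\<close>)
    also have "\<dots> = c l" using that by simp
    finally show ?thesis by simp
  qed
  have ww: "cinner (s *\<^sub>R w) (s *\<^sub>R w) = 1"
  proof -
    have "cinner (s *\<^sub>R w) (s *\<^sub>R w) = of_real ((norm (s *\<^sub>R w))^2)"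
      by (rule cinner_self)
    also have "norm (s *\<^sub>R w) = 1" using w0 by (simp add: s_def)
    finally show ?thesis by simp
  qed
  have "ON (Suc k) (gs_step k M)"
    unfolding ON_def
  proof (intro allI impI)
    fix l l' assume l: "l < Suc k" and l': "l' < Suc k"
    show "cinner (column (?e l) (gs_step k M)) (column (?e l') (gs_step k M)) = (if l = l' then 1 else 0)"
    proof (cases "l = k")
      case True
      show ?thesis
      proof (cases "l' = k")
        case True then show ?thesis using \<open>l = k\<close> ww by (simp add: col)
      next
        case False
        then have "l' < k" using l' by simp
        then have "cinner (s *\<^sub>R w) (column (?e l') M) = 0"
          using cw[of l'] by (simp add: cinner_commute[of "s *\<^sub>R w"] cinner_scaleR_right)
        then show ?thesis using \<open>l = k\<close> False neq[OF \<open>l' < k\<close>] by (simp add: col)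
      qed
    next
      case False
      then have "l < k" using l by simp
      show ?thesis
      proof (cases "l' = k")
        case True then show ?thesis using \<open>l < k\<close> neq[OF \<open>l < k\<close>] cw[OF \<open>l < k\<close>]
          by (simp add: col cinner_scaleR_right)
      next
        case False
        then have "l' < k" using l' by simp
        then show ?thesis using on \<open>l < k\<close> neq[OF \<open>l < k\<close>] neq[OF \<open>l' < k\<close>]
          by (simp add: col ON_def)
      qed
    qed
  qed
  with invS show ?thesis by blast
qed

lemma gsk_props:
  fixes A :: "complex^'n^'n"
  assumes "invertible A"
  shows "k \<le> CARD('n) \<Longrightarrow> invertible (gsk k A) \<and> ON k (gsk k A)"
proof (induction k)
  case 0 then show ?case using assms by (simp add: ON_def)
next
  case (Suc k) then show ?case using gs_step_props[of k "gsk k A"] by simp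
qed

lemma GS_unitary:
  fixes A :: "complex^'n^'n"
  assumes "invertible A" shows "unitary_mat (GS A)"
proof -
  let ?Q = "GS A"
  have on: "ON CARD('n) ?Q" using gsk_props[OF assms, of "CARD('n)"] by (simp add: GS_def)
  have "cadj ?Q ** ?Q = mat 1"
    unfolding vec_eq_iff
  proof (intro allI)
    fix i j :: 'n
    obtain l where l: "l < CARD('n)" "enum_n l = i" using enum_n_surj by blast
    obtain l' where l': "l' < CARD('n)" "enum_n l' = j" using enum_n_surj by blast
    have "(cadj ?Q ** ?Q) $ i $ j = cinner (column i ?Q) (column j ?Q)"
      by (simp add: matrix_matrix_mult_def cinner_def column_def)
    also have "\<dots> = (if l = l' then 1 else 0)" using on l l' by (auto simp: ON_def)
    also have "\<dots> = mat 1 $ i $ j" using l l' enum_n_inj[of l l'] by (auto simp: mat_def)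
    finally show "(cadj ?Q ** ?Q) $ i $ j = mat 1 $ i $ j" .
  qed
  then show ?thesis by (simp add: unitary_mat_left)
qed

subsection \<open>Measurability\<close>

lemma continuous_on_gsw: "continuous_on S (gsw k :: complex^'n^'n \<Rightarrow> complex^'n)"
  unfolding gsw_def cinner_def column_def vector_scalar_mult_def
  by (intro continuous_intros)

lemma gs_step_split: "gs_step k M =
   (\<chi> i j. if j = enum_n k then 0 else M $ i $ j) +
   inverse (norm (gsw k M)) *\<^sub>R (\<chi> i j. if j = enum_n k then gsw k M $ i else 0)"
  by (simp add: vec_eq_iff gs_step_def)

lemma gs_step_measurable: "gs_step k \<in> borel_measurable (borel :: (complex^'n^'n) measure)"
proof -
  have c1: "continuous_on UNIV (\<lambda>M::complex^'n^'n. (\<chi> i j. if j = enum_n k then 0 else M $ i $ j))"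
    apply (intro continuous_on_vec_lambda)
    subgoal for i j by (cases "j = enum_n k") (auto intro!: continuous_intros)
    done
  have c2: "continuous_on UNIV (\<lambda>M::complex^'n^'n. (\<chi> i j. if j = enum_n k then gsw k M $ i else 0))"
    apply (intro continuous_on_vec_lambda)
    subgoal for i j by (cases "j = enum_n k") (auto intro!: continuous_intros continuous_on_gsw)
    done
  have c3: "continuous_on UNIV (\<lambda>M::complex^'n^'n. norm (gsw k M))"
    by (intro continuous_intros continuous_on_gsw)
  show ?thesis
    unfolding gs_step_split[abs_def]
    by (intro borel_measurable_add borel_measurable_scaleR borel_measurable_inverse
          borel_measurable_continuous_onI c1 c2 c3)
qed

lemma gsk_measurable: "gsk k \<in> borel_measurable (borel :: (complex^'n^'n) measure)"
proof (induction k)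
  case 0 then show ?case by simp
next
  case (Suc k)
  have "gsk (Suc k) = gs_step k \<circ> gsk k" by (simp add: fun_eq_iff)
  then show ?case using measurable_comp[OF Suc gs_step_measurable] by metis
qed

lemma GS_measurable: "GS \<in> borel_measurable (borel :: (complex^'n^'n) measure)"
proof -
  have "(GS :: complex^'n^'n \<Rightarrow> _) = gsk CARD('n)" by (simp add: fun_eq_iff GS_def)
  then show ?thesis by (metis gsk_measurable)
qed

lemma lborel_orth_vimage:
  fixes T :: "real^'k::{finite,wellorder} \<Rightarrow> real^'k::_"
  assumes T: "orthogonal_transformation T" and X: "X \<in> sets borel" "bounded X"
  shows "emeasure lborel (T -` X) = emeasure lborel X"
proof -
  have lin: "linear T" using T by (rule orthogonal_transformation_linear)
  have contT: "continuous_on UNIV T" using lin by (intro linear_continuous_on) (simp add: linear_conv_bounded_linear)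
  have Tm: "T \<in> borel_measurable borel" using contT by (rule borel_measurable_continuous_onI)
  have bij: "bij T" using T by (rule orthogonal_transformation_bij)
  have Ti: "orthogonal_transformation (inv T)" using T by (rule orthogonal_transformation_inv)
  have eq: "T -` X = inv T ` X"
    using bij by (simp add: bij_vimage_eq_inv_image)
  have XL: "X \<in> lmeasurable"
    by (rule bounded_set_imp_lmeasurable[OF X(2)]) (use X(1) in simp)
  have YL: "T -` X \<in> lmeasurable"
    unfolding eq by (rule measurable_orthogonal_image[OF Ti XL])
  have mY: "measure lebesgue (T -` X) = measure lebesgue X"
    unfolding eq by (rule measure_orthogonal_image[OF Ti XL])
  have Yb: "T -` X \<in> sets borel"
    using measurable_sets_borel[OF Tm X(1)] by simp
  have "emeasure lborel (T -` X) = emeasure lebesgue (T -` X)"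
    using Yb by simp
  also have "\<dots> = measure lebesgue (T -` X)" using YL by (rule emeasure_eq_measure2)
  also have "\<dots> = measure lebesgue X" by (simp add: mY)
  also have "\<dots> = emeasure lebesgue X" using XL by (rule emeasure_eq_measure2[symmetric])
  also have "\<dots> = emeasure lborel X" using X(1) by simp
  finally show ?thesis .
qed

lemma matrix_mult_diff: "(V::complex^'n^'n) ** (A - B) = V ** A - V ** B"
  by (simp add: vec_eq_iff matrix_matrix_mult_def sum_subtractf right_diff_distrib)

lemma norm_sq_columns: "(norm (B::complex^'n^'n))^2 = (\<Sum>j\<in>UNIV. (norm (column j B))^2)"
proof -
  have "(norm B)^2 = (\<Sum>i\<in>UNIV. (norm (B $ i))^2)"
    by (simp add: norm_vec_def L2_set_def sum_nonneg)
  also have "\<dots> = (\<Sum>i\<in>UNIV. \<Sum>j\<in>UNIV. (norm (B $ i $ j))^2)"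
    by (simp add: norm_vec_def L2_set_def sum_nonneg)
  also have "\<dots> = (\<Sum>j\<in>UNIV. \<Sum>i\<in>UNIV. (norm (B $ i $ j))^2)"
    by (rule sum.swap)
  also have "\<dots> = (\<Sum>j\<in>UNIV. (norm (column j B))^2)"
    by (simp add: norm_vec_def L2_set_def sum_nonneg column_def)
  finally show ?thesis .
qed

lemma norm_unitary_mat:
  assumes "unitary_mat V" shows "norm ((V::complex^'n^'n) ** (B::complex^'n^'n)) = norm B"
proof -
  have "(norm (V ** B))^2 = (\<Sum>j\<in>UNIV. (norm (column j (V ** B)))^2)" by (rule norm_sq_columns)
  also have "\<dots> = (\<Sum>j\<in>UNIV. (norm (column j B))^2)" by (simp add: column_mult norm_unitary_vec assms)
  also have "\<dots> = (norm B)^2" by (rule norm_sq_columns[symmetric])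
  finally have "(norm (V ** B))^2 = (norm B)^2" .
  then show ?thesis by (simp add: power2_eq_iff_nonneg)
qed

lemma invertible_unitary: "unitary_mat V \<Longrightarrow> invertible V"
  unfolding unitary_mat_def invertible_def by blast

lemma invertible_unitary_mult:
  assumes "unitary_mat V" shows "invertible ((V::complex^'n^'n) ** (A::complex^'n^'n)) \<longleftrightarrow> invertible A"
proof
  assume "invertible (V ** A)"
  moreover have "A = cadj V ** (V ** A)"
    using assms by (simp add: matrix_mul_assoc unitary_mat_left)
  ultimately show "invertible A"
    by (metis invertible_mult invertible_unitary unitary_cadj assms)
qed (use invertible_mult invertible_unitary assms in blast)

lemma continuous_on_det: "continuous_on S (\<lambda>A::complex^'n^'n. det A)"
  unfolding det_def by (intro continuous_intros)

lemma haar_from_coords: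
  fixes \<Phi> :: "real^'k::{finite,wellorder} \<Rightarrow> complex^'n^'n" and \<Psi>
  assumes PsiPhi: "\<And>r. \<Psi> (\<Phi> r) = r" and PhiPsi: "\<And>A. \<Phi> (\<Psi> A) = A"
    and normPhi: "\<And>r. norm (\<Phi> r) = norm r"
    and diffPhi: "\<And>x y. \<Phi> (x - y) = \<Phi> x - \<Phi> y"
    and contPhi: "continuous_on UNIV \<Phi>" and contPsi: "continuous_on UNIV \<Psi>"
  shows "\<exists>H :: (complex^'n^'n) measure. sets H = sets borel \<and> finite_measure H \<and>
           emeasure H (space H) > 0 \<and> (AE W in H. unitary_mat W) \<and>
           (\<forall>V. unitary_mat V \<longrightarrow> distr H borel (\<lambda>W. V ** W) = H)"
proof -
  have diffPsi: "\<Psi> (A - B) = \<Psi> A - \<Psi> B" for A B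
    by (metis PhiPsi PsiPhi diffPhi)
  have normPsi: "norm (\<Psi> A) = norm A" for A
    by (metis PhiPsi normPhi)
  have Phi0: "\<Phi> 0 = 0" by (metis diffPhi diff_self)
  have Psi0: "\<Psi> 0 = 0" by (metis diffPsi diff_self)
  define \<rho> where "\<rho> = norm (\<Psi> (mat 1)) + 1"
  define S where "S = {r. invertible (\<Phi> r) \<and> norm r < \<rho>}"
  have S_eq: "S = {r. det (\<Phi> r) \<noteq> 0} \<inter> {r. norm r < \<rho>}"
    by (auto simp: S_def invertible_det_nz)
  have openS: "open S"
    unfolding S_eq
    by (intro open_Int open_Collect_neq open_Collect_less continuous_intros
         continuous_on_compose2[OF continuous_on_det contPhi]) auto
  then have Sb: "S \<in> sets borel" by simp
  have bS: "bounded S" unfolding bounded_iff S_def by (auto intro: less_imp_le)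
  have r0: "\<Psi> (mat 1) \<in> S" unfolding S_def \<rho>_def
    using invertible_unitary[OF unitary_one] by (simp add: PhiPsi)
  obtain \<delta> where \<delta>: "\<delta> > 0" "ball (\<Psi> (mat 1)) \<delta> \<subseteq> S"
    using openS r0 open_contains_ball by blast
  have posS: "emeasure lborel S > 0"
  proof -
    have "0 < measure lborel (ball (\<Psi> (mat 1)) \<delta>)" using \<delta>(1) by (rule content_ball_pos)
    then have "0 < emeasure lborel (ball (\<Psi> (mat 1)) \<delta>)"
      using emeasure_lborel_ball_finite[of "\<Psi> (mat 1)" \<delta>]
      by (simp add: emeasure_eq_ennreal_measure)
    also have "\<dots> \<le> emeasure lborel S" using \<delta>(2) Sb by (intro emeasure_mono) auto
    finally show ?thesis .
  qed
  have finS: "emeasure lborel S < \<infinity>" using bS by (rule emeasure_bounded_finite)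
  define P where "P = density lborel (indicator S :: real^'k::_ \<Rightarrow> ennreal)"
  have setsP: "sets P = sets borel" by (simp add: P_def)
  have Pm: "emeasure P X = emeasure lborel (S \<inter> X)" if "X \<in> sets borel" for X
    unfolding P_def using that Sb by (simp add: emeasure_restricted)
  have invP: "distr P borel (\<lambda>r. \<Psi> (V ** \<Phi> r)) = P" if V: "unitary_mat V" for V
  proof -
    define T where "T r = \<Psi> (V ** \<Phi> r)" for r
    have contT: "continuous_on UNIV T"
      unfolding T_def
      by (intro continuous_on_compose2[OF contPsi] continuous_intros contPhi) auto
    have Tm: "T \<in> borel_measurable borel" using contT by (rule borel_measurable_continuous_onI)
    have normT: "norm (T r) = norm r" for r
      by (simp add: T_def normPsi norm_unitary_mat[OF V] normPhi)
    have orthT: "orthogonal_transformation T"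
      unfolding orthogonal_transformation_isometry
    proof (intro conjI allI)
      show "T 0 = 0" by (simp add: T_def Phi0 Psi0)
      fix x y
      have "T x - T y = \<Psi> (V ** \<Phi> (x - y))"
        by (simp add: T_def diffPsi[symmetric] diffPhi matrix_mult_diff)
      then show "dist (T x) (T y) = dist x y"
        by (simp add: dist_norm normPsi norm_unitary_mat[OF V] normPhi)
    qed
    have TS: "T -` S = S"
      by (auto simp: S_def T_def PhiPsi invertible_unitary_mult[OF V] normT[unfolded T_def])
    show ?thesis
      unfolding T_def[symmetric]
    proof (rule measure_eqI)
      show "sets (distr P borel T) = sets P" by (simp add: setsP)
      fix X assume "X \<in> sets (distr P borel T)"
      then have X: "X \<in> sets borel" by simp
      have TX: "T -` X \<in> sets borel" using measurable_sets_borel[OF Tm X] by simp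
      have "emeasure (distr P borel T) X = emeasure P (T -` X)"
        using X Tm by (subst emeasure_distr) (auto simp: P_def)
      also have "\<dots> = emeasure lborel (S \<inter> T -` X)" using TX by (rule Pm)
      also have "S \<inter> T -` X = T -` (S \<inter> X)" using TS by auto
      also have "emeasure lborel (T -` (S \<inter> X)) = emeasure lborel (S \<inter> X)"
        by (rule lborel_orth_vimage[OF orthT]) (use X Sb bS in \<open>auto intro: bounded_subset\<close>)
      also have "\<dots> = emeasure P X" using X by (rule Pm[symmetric])
      finally show "emeasure (distr P borel T) X = emeasure P X" .
    qed
  qed
  define H where "H = distr P borel (\<lambda>r. GS (\<Phi> r))"
  have GSPm: "(\<lambda>r. GS (\<Phi> r)) \<in> borel_measurable P"
    unfolding setsP measurable_cong_sets[OF setsP refl]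
    by (rule measurable_compose[OF borel_measurable_continuous_onI[OF contPhi] GS_measurable])
  have setsH: "sets H = sets borel" by (simp add: H_def)
  have H_UNIV: "emeasure H (space H) = emeasure lborel S"
  proof -
    have sp: "space P = UNIV" by (simp add: P_def)
    show ?thesis using GSPm Pm[of UNIV] by (simp add: H_def emeasure_distr sp)
  qed
  have fin: "finite_measure H"
    by (rule finite_measureI) (use H_UNIV finS in simp)
  have pos: "emeasure H (space H) > 0" using H_UNIV posS by simp
  have AEU: "AE W in H. unitary_mat W"
  proof -
    have "AE r in P. r \<in> S"
      unfolding P_def
      by (subst AE_density) (auto simp: Sb borel_measurable_indicator indicator_def intro!: AE_I2)
    then have "AE r in P. unitary_mat (GS (\<Phi> r))"
      by eventually_elim (auto simp: S_def intro: GS_unitary)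
    then show ?thesis
      unfolding H_def using GSPm closed_unitary
      by (subst AE_distr_iff) (auto intro: borel_closed)
  qed
  have invH: "distr H borel (\<lambda>W. V ** W) = H" if V: "unitary_mat V" for V
  proof -
    have "continuous_on UNIV (\<lambda>W::complex^'n^'n. V ** W)"
      using continuous_on_mmult[of UNIV "\<lambda>_. V" "\<lambda>W. W"] by (simp add: continuous_on_const continuous_on_id)
    then have Vm: "(\<lambda>W::complex^'n^'n. V ** W) \<in> borel_measurable borel"
      by (rule borel_measurable_continuous_onI)
    have Tm: "(\<lambda>r. \<Psi> (V ** \<Phi> r)) \<in> borel_measurable borel"
      by (intro borel_measurable_continuous_onI continuous_on_compose2[OF contPsi] continuous_intros contPhi) auto
    have "distr H borel (\<lambda>W. V ** W) = distr P borel (\<lambda>r. V ** GS (\<Phi> r))"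
      unfolding H_def using GSPm Vm by (subst distr_distr) (auto simp: comp_def)
    also have "\<dots> = distr P borel (\<lambda>r. GS (\<Phi> (\<Psi> (V ** \<Phi> r))))"
      by (simp add: PhiPsi GS_mult[OF V])
    also have "\<dots> = distr (distr P borel (\<lambda>r. \<Psi> (V ** \<Phi> r))) borel (\<lambda>r. GS (\<Phi> r))"
      using GSPm Tm by (subst distr_distr) (auto simp: comp_def setsP measurable_cong_sets[OF setsP refl])
    also have "\<dots> = H" unfolding invP[OF V] H_def ..
    finally show ?thesis .
  qed
  show ?thesis using setsH fin pos AEU invH by blast
qed


lemma haar_exists:
  "\<exists>H :: (complex^'n^'n) measure. sets H = sets borel \<and> finite_measure H \<and>
     emeasure H (space H) > 0 \<and> (AE W in H. unitary_mat W) \<and>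
     (\<forall>V. unitary_mat V \<longrightarrow> distr H borel (\<lambda>W. V ** W) = H)"
proof -
  have "card (UNIV :: (('n \<times> 'n) \<times> bool) set) = card (UNIV :: ('n \<times> 'n) bit0 set)"
    by (simp add: card_cartesian_product card_UNIV_bool)
  then obtain \<beta> :: "('n \<times> 'n) \<times> bool \<Rightarrow> ('n \<times> 'n) bit0" where bij: "bij \<beta>"
    using finite_same_card_bij[of "UNIV :: (('n \<times> 'n) \<times> bool) set" "UNIV :: ('n \<times> 'n) bit0 set"]
    by auto
  define \<Phi> :: "real^(('n \<times> 'n) bit0) \<Rightarrow> complex^'n^'n" where
    "\<Phi> r = (\<chi> i j. Complex (r $ \<beta> ((i,j),False)) (r $ \<beta> ((i,j),True)))" for r
  define \<Psi> :: "complex^'n^'n \<Rightarrow> real^(('n \<times> 'n) bit0)" where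
    "\<Psi> A = (\<chi> k. if snd (inv \<beta> k) then Im (A $ fst (fst (inv \<beta> k)) $ snd (fst (inv \<beta> k)))
                   else Re (A $ fst (fst (inv \<beta> k)) $ snd (fst (inv \<beta> k))))" for A
  have bi1: "\<beta> (inv \<beta> k) = k" for k using bij by (meson bij_inv_eq_iff)
  have bi2: "inv \<beta> (\<beta> p) = p" for p using bij by (simp add: bij_is_inj)
  have PsiPhi: "\<Psi> (\<Phi> r) = r" for r
  proof -
    have "\<Psi> (\<Phi> r) $ k = r $ k" for k
    proof -
      obtain i j b where p: "inv \<beta> k = ((i,j),b)" by (metis prod.exhaust)
      have "k = \<beta> ((i,j),b)" using bi1[of k] p by simp
      then show ?thesis using p by (cases b) (simp_all add: \<Psi>_def \<Phi>_def)
    qed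
    then show ?thesis by (simp add: vec_eq_iff)
  qed
  have PhiPsi: "\<Phi> (\<Psi> A) = A" for A
    by (simp add: vec_eq_iff \<Phi>_def \<Psi>_def bi2 complex_eq_iff)
  have diffPhi: "\<Phi> (x - y) = \<Phi> x - \<Phi> y" for x y
    by (simp add: vec_eq_iff \<Phi>_def complex_eq_iff)
  have e1: "(\<Sum>q\<in>UNIV. \<Sum>b\<in>UNIV. g (q,b)) = (\<Sum>p\<in>UNIV. g p)" for g :: "('n \<times> 'n) \<times> bool \<Rightarrow> real"
    by (simp add: sum.cartesian_product UNIV_Times_UNIV[symmetric] del: UNIV_Times_UNIV)
  have e2: "(\<Sum>i\<in>UNIV. \<Sum>j\<in>UNIV. g (i,j)) = (\<Sum>q\<in>UNIV. g q)" for g :: "'n \<times> 'n \<Rightarrow> real"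
    by (simp add: sum.cartesian_product UNIV_Times_UNIV[symmetric] del: UNIV_Times_UNIV)
  have normPhi: "norm (\<Phi> r) = norm r" for r
  proof -
    have "(norm (\<Phi> r))^2 = (\<Sum>i\<in>UNIV. \<Sum>j\<in>UNIV. (cmod (\<Phi> r $ i $ j))^2)"
      by (simp add: norm_vec_def L2_set_def sum_nonneg)
    also have "\<dots> = (\<Sum>i\<in>UNIV. \<Sum>j\<in>UNIV. \<Sum>b\<in>UNIV. (r $ \<beta> ((i,j),b))^2)"
      by (simp add: \<Phi>_def cmod_power2 UNIV_bool add.commute)
    also have "\<dots> = (\<Sum>q\<in>UNIV. \<Sum>b\<in>UNIV. (r $ \<beta> (q,b))^2)"
      using e2[of "\<lambda>q. \<Sum>b\<in>UNIV. (r $ \<beta> (q,b))^2"] by simp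
    also have "\<dots> = (\<Sum>p\<in>UNIV. (r $ \<beta> p)^2)"
      using e1[of "\<lambda>p. (r $ \<beta> p)^2"] by simp
    also have "\<dots> = (\<Sum>k\<in>UNIV. (r $ k)^2)"
      using sum.reindex_bij_betw[OF bij[unfolded bij_betw_def[symmetric]], of "\<lambda>k. (r $ k)^2"]
      by simp
    also have "\<dots> = (norm r)^2"
      by (simp add: norm_vec_def L2_set_def sum_nonneg)
    finally show ?thesis by (simp add: power2_eq_iff_nonneg)
  qed
  have contPhi: "continuous_on UNIV \<Phi>"
    unfolding \<Phi>_def Complex_eq by (intro continuous_intros)
  have contPsi: "continuous_on UNIV \<Psi>"
    unfolding \<Psi>_def
    apply (intro continuous_on_vec_lambda)
    subgoal for k by (cases "snd (inv \<beta> k)") (auto intro!: continuous_intros)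
    done
  show ?thesis
    by (rule haar_from_coords[OF PsiPhi PhiPsi normPhi diffPhi contPhi contPsi])
qed

lemma inner_approx:
  fixes \<mu> :: "'a::t2_space measure"
  assumes sets: "sets \<mu> = sets borel" and fin: "finite_measure \<mu>"
    and reg: "\<forall>A\<in>sets borel. emeasure \<mu> A = (SUP K \<in> {K. K \<subseteq> A \<and> compact K}. emeasure \<mu> K)"
    and A: "A \<in> sets borel" and e: "e > 0"
  shows "\<exists>K. compact K \<and> K \<subseteq> A \<and> measure \<mu> (A - K) < e"
proof (cases "measure \<mu> A < e")
  case True
  then show ?thesis by (intro exI[of _ "{}"]) auto
next
  case False
  interpret finite_measure \<mu> by (rule fin)
  have Ab: "A \<in> sets \<mu>" using A sets by simp
  have "ennreal (measure \<mu> A - e/2) < ennreal (measure \<mu> A)"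
    using False e by (subst ennreal_less_iff) auto
  also have "\<dots> = emeasure \<mu> A" using Ab by (simp add: emeasure_eq_measure)
  also have "\<dots> = (SUP K \<in> {K. K \<subseteq> A \<and> compact K}. emeasure \<mu> K)" using reg A by blast
  finally obtain K where K: "K \<subseteq> A" "compact K" "ennreal (measure \<mu> A - e/2) < emeasure \<mu> K"
    by (auto simp: less_SUP_iff)
  have Kb: "K \<in> sets \<mu>" using K(2) sets by (simp add: compact_imp_closed borel_closed)
  have "ennreal (measure \<mu> A - e/2) < ennreal (measure \<mu> K)"
    using K(3) Kb by (simp add: emeasure_eq_measure)
  moreover have "0 \<le> measure \<mu> A - e/2" using False e by simp
  ultimately have "measure \<mu> A - e/2 < measure \<mu> K"
    by (simp add: ennreal_less_iff)
  moreover have "measure \<mu> (A - K) = measure \<mu> A - measure \<mu> K"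
    using Kb Ab K(1) by (simp add: finite_measure_Diff)
  ultimately show ?thesis using K e by (intro exI[of _ K]) auto
qed

lemma lusin:
  fixes \<mu> :: "'a::t2_space measure" and f :: "'a \<Rightarrow> 'b::second_countable_topology"
  assumes sets: "sets \<mu> = sets borel" and fin: "finite_measure \<mu>"
    and reg: "\<forall>A\<in>sets borel. emeasure \<mu> A = (SUP K \<in> {K. K \<subseteq> A \<and> compact K}. emeasure \<mu> K)"
    and f: "f \<in> borel_measurable borel" and d: "d > 0"
  shows "\<exists>K. compact K \<and> continuous_on K f \<and> measure \<mu> (UNIV - K) < d"
proof -
  interpret finite_measure \<mu> by (rule fin)
  obtain B :: "'b set set" where B: "countable B" "topological_basis B"
    using ex_countable_basis by blast
  define B' where "B' = insert {} B"
  have B': "countable B'" "B' \<noteq> {}" using B(1) by (auto simp: B'_def)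
  define b where "b = from_nat_into B'"
  have rb: "range b = B'" unfolding b_def using B' by (simp add: range_from_nat_into)
  define A where "A n = f -` b n" for n
  have Ab: "A n \<in> sets borel" for n
  proof -
    have "b n \<in> B'" using rb by auto
    then have "open (b n)" using B(2) by (auto simp: B'_def topological_basis_def)
    then show ?thesis unfolding A_def using measurable_sets_borel[OF f] by simp
  qed
  define e where "e n = d / 2 ^ (n + 3)" for n :: nat
  have e: "e n > 0" for n using d by (simp add: e_def)
  have "\<forall>n. \<exists>K. compact K \<and> K \<subseteq> A n \<and> measure \<mu> (A n - K) < e n"
    using inner_approx[OF sets fin reg Ab e] by blast
  then obtain K where K: "\<And>n. compact (K n)" "\<And>n. K n \<subseteq> A n" "\<And>n. measure \<mu> (A n - K n) < e n"
    by metis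
  have Ac: "UNIV - A n \<in> sets borel" for n using Ab by auto
  have "\<forall>n. \<exists>L. compact L \<and> L \<subseteq> UNIV - A n \<and> measure \<mu> ((UNIV - A n) - L) < e n"
    using inner_approx[OF sets fin reg Ac e] by blast
  then obtain L where L: "\<And>n. compact (L n)" "\<And>n. L n \<subseteq> UNIV - A n"
      "\<And>n. measure \<mu> ((UNIV - A n) - L n) < e n"
    by metis
  have Kb: "K n \<in> sets borel" for n using K(1) by (simp add: compact_imp_closed borel_closed)
  have Lb: "L n \<in> sets borel" for n using L(1) by (simp add: compact_imp_closed borel_closed)
  define C where "C n = K n \<union> L n" for n
  have Cc: "compact (C n)" for n using K(1) L(1) by (simp add: C_def compact_Un)
  have Cb: "C n \<in> sets \<mu>" for n using Cc sets by (simp add: compact_imp_closed borel_closed)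
  have Cm: "measure \<mu> (UNIV - C n) \<le> 2 * e n" for n
  proof -
    have "UNIV - C n \<subseteq> (A n - K n) \<union> ((UNIV - A n) - L n)" by (auto simp: C_def)
    then have "measure \<mu> (UNIV - C n) \<le> measure \<mu> ((A n - K n) \<union> ((UNIV - A n) - L n))"
      using Ab sets Kb Lb by (intro finite_measure_mono) auto
    also have "\<dots> \<le> measure \<mu> (A n - K n) + measure \<mu> ((UNIV - A n) - L n)"
      using Ab sets Kb Lb
      by (intro measure_subadditive) (auto simp: emeasure_eq_measure)
    finally show ?thesis using K(3)[of n] L(3)[of n] by linarith
  qed
  define KK where "KK = (\<Inter>n. C n)"
  have KKc: "compact KK"
  proof -
    have "closed KK" unfolding KK_def using Cc by (simp add: closed_INT compact_imp_closed)
    moreover have "KK \<subseteq> C 0" by (auto simp: KK_def)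
    ultimately show ?thesis using Cc[of 0] compact_Int_closed[of "C 0" KK] by (simp add: Int_absorb1)
  qed
  have meas: "measure \<mu> (UNIV - KK) < d"
  proof -
    have sum2: "(\<lambda>n. 2 * e n) sums (d / 2)"
    proof -
      have "(\<lambda>n. (d / 4) * (1/2) ^ n) sums ((d/4) * (1 / (1 - 1/2)))"
        by (intro sums_mult geometric_sums) simp
      moreover have "(\<lambda>n. 2 * e n) = (\<lambda>n. (d / 4) * (1/2) ^ n)"
        by (simp add: e_def fun_eq_iff power_add field_simps)
      ultimately show ?thesis by simp
    qed
    have su: "summable (\<lambda>n. measure \<mu> (UNIV - C n))"
      by (rule summable_comparison_test'[of "\<lambda>n. 2 * e n" 0]) (use sum2 Cm in \<open>auto simp: sums_iff\<close>)
    have "UNIV - KK = (\<Union>n. UNIV - C n)" by (auto simp: KK_def)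
    then have "measure \<mu> (UNIV - KK) \<le> (\<Sum>n. measure \<mu> (UNIV - C n))"
    proof -
      have sp: "space \<mu> = UNIV" using sets by (metis sets_eq_imp_space_eq space_borel)
      have "range (\<lambda>n. UNIV - C n) \<subseteq> sets \<mu>"
        using Cb sets.compl_sets[of _ \<mu>] by (auto simp: sp)
      then show ?thesis
        using finite_measure_subadditive_countably[of "\<lambda>n. UNIV - C n"] su \<open>UNIV - KK = _\<close> by simp
    qed
    also have "\<dots> \<le> (\<Sum>n. 2 * e n)"
      using su sum2 Cm by (intro suminf_le) (auto simp: sums_iff)
    also have "\<dots> = d / 2" using sum2 by (simp add: sums_iff)
    finally show ?thesis using d by linarith
  qed
  have cont: "continuous_on KK f"
    unfolding continuous_on_open_invariant
  proof (intro allI impI)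
    fix V :: "'b set" assume "open V"
    then obtain BV where BV: "BV \<subseteq> B" "\<Union>BV = V" using B(2) by (auto simp: topological_basis_def)
    define I where "I = {n. b n \<in> BV}"
    have V_eq: "V = (\<Union>n\<in>I. b n)"
    proof -
      have "BV \<subseteq> range b" using BV(1) rb by (auto simp: B'_def)
      then show ?thesis using BV(2) by (auto simp: I_def)
    qed
    have key: "x \<in> A n \<longleftrightarrow> x \<notin> L n" if "x \<in> KK" for x n
    proof -
      have "x \<in> C n" using that by (auto simp: KK_def)
      then show ?thesis using K(2)[of n] L(2)[of n] by (auto simp: C_def)
    qed
    show "\<exists>U. open U \<and> U \<inter> KK = f -` V \<inter> KK"
    proof (intro exI conjI)
      show "open (\<Union>n\<in>I. - L n)"
        using L(1) by (intro open_UN) (auto simp: compact_imp_closed open_Compl)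
      show "(\<Union>n\<in>I. - L n) \<inter> KK = f -` V \<inter> KK"
        using key by (auto simp: V_eq A_def)
    qed
  qed
  show ?thesis using KKc cont meas by blast
qed


lemma act_props:
  assumes "n_space_action act"
  shows "\<And>x. act (mat 1) x = x"
    and "\<And>U V x. unitary_mat U \<Longrightarrow> unitary_mat V \<Longrightarrow> act (U ** V) x = act U (act V x)"
    and "continuous_on ({U. unitary_mat U} \<times> UNIV) (\<lambda>(U, x). act U x)"
  using assms unfolding n_space_action_def by auto

lemma act_inv:
  assumes "n_space_action act" "unitary_mat W"
  shows "act W (act (cadj W) x) = x" "act (cadj W) (act W x) = x"
proof -
  note P = act_props[OF assms(1)]
  have "act W (act (cadj W) x) = act (W ** cadj W) x"
    using P(2)[of W "cadj W"] assms(2) unitary_cadj by metis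
  also have "\<dots> = x" using assms(2) P(1) by (simp add: unitary_mat_def)
  finally show "act W (act (cadj W) x) = x" .
  have "act (cadj W) (act W x) = act (cadj W ** W) x"
    using P(2)[of "cadj W" W] assms(2) unitary_cadj by metis
  also have "\<dots> = x" using assms(2) P(1) by (simp add: unitary_mat_def)
  finally show "act (cadj W) (act W x) = x" .
qed

lemma continuous_on_act_comp:
  fixes act :: "complex^'n^'n \<Rightarrow> 'a::topological_space \<Rightarrow> 'a"
  assumes "n_space_action act"
    and "continuous_on S u" "continuous_on S v" "\<And>s. s \<in> S \<Longrightarrow> unitary_mat (u s)"
  shows "continuous_on S (\<lambda>s. act (u s) (v s))"
proof -
  have "continuous_on S (\<lambda>s. (\<lambda>(U, x). act U x) (u s, v s))"
    by (rule continuous_on_compose2[OF act_props(3)[OF assms(1)]])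
       (use assms in \<open>auto intro!: continuous_intros\<close>)
  then show ?thesis by simp
qed

lemma saturate:
  fixes act :: "complex^'n^'n \<Rightarrow> 'a::t2_space \<Rightarrow> 'a" and f :: "'a \<Rightarrow> complex^'n^'n"
  assumes act: "n_space_action act" and eqv: "equivariant act f"
    and K0: "compact K0" and fc: "continuous_on K0 f"
  defines "K1 \<equiv> (\<lambda>(U,x). act U x) ` ({U. unitary_mat U} \<times> K0)"
  shows "compact K1" "K0 \<subseteq> K1" "\<And>W y. unitary_mat W \<Longrightarrow> y \<in> K1 \<Longrightarrow> act W y \<in> K1"
    "continuous_on K1 f"
proof -
  note P = act_props[OF act]
  let ?Un = "{U::complex^'n^'n. unitary_mat U}"
  have cUK: "compact (?Un \<times> K0)" using compact_unitary K0 by (rule compact_Times)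
  have ca: "continuous_on (?Un \<times> K0) (\<lambda>(U,x). act U x)"
    by (rule continuous_on_subset[OF P(3)]) auto
  show "compact K1" unfolding K1_def using cUK ca by (rule compact_continuous_image[rotated])
  show "K0 \<subseteq> K1"
  proof
    fix x assume "x \<in> K0"
    then have "(mat 1, x) \<in> ?Un \<times> K0" using unitary_one by auto
    then show "x \<in> K1" unfolding K1_def using P(1)[of x] by force
  qed
  show "act W y \<in> K1" if W: "unitary_mat W" and y: "y \<in> K1" for W y
  proof -
    obtain U x where Ux: "unitary_mat U" "x \<in> K0" "y = act U x" using y by (auto simp: K1_def)
    then have "act W y = act (W ** U) x" using P(2) W by simp
    moreover have "(W ** U, x) \<in> ?Un \<times> K0" using Ux W unitary_mult by auto
    ultimately show ?thesis unfolding K1_def by force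
  qed
  show "continuous_on K1 f"
    unfolding continuous_on_closed_invariant
  proof (intro allI impI)
    fix B :: "(complex^'n^'n) set" assume B: "closed B"
    define F where "F p = fst p ** f (snd p) ** cadj (fst p)" for p :: "(complex^'n^'n) \<times> 'a"
    have cF: "continuous_on (?Un \<times> K0) F"
    proof -
      have "continuous_on (?Un \<times> K0) (\<lambda>p. f (snd p))"
        by (rule continuous_on_compose2[OF fc]) (auto intro: continuous_intros)
      then show ?thesis unfolding F_def by (intro continuous_intros)
    qed
    have clUK: "closed (?Un \<times> K0)" using cUK by (rule compact_imp_closed)
    define G where "G = (?Un \<times> K0) \<inter> F -` B"
    have "closed G" unfolding G_def using cF clUK B by (rule continuous_closed_preimage)
    then have cG: "compact G"
      using compact_Int_closed[OF cUK] by (metis G_def Int_absorb1 inf_le1 inf.orderE)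
    define A where "A = (\<lambda>(U,x). act U x) ` G"
    have "compact A" unfolding A_def
      by (rule compact_continuous_image[OF continuous_on_subset[OF ca] cG]) (auto simp: G_def)
    then have clA: "closed A" by (rule compact_imp_closed)
    have "A \<inter> K1 = f -` B \<inter> K1"
    proof (intro equalityI subsetI)
      fix y assume "y \<in> A \<inter> K1"
      then obtain U x where "unitary_mat U" "x \<in> K0" "F (U,x) \<in> B" "y = act U x"
        by (auto simp: A_def G_def)
      moreover then have "f y = F (U,x)" using eqv by (simp add: equivariant_def F_def)
      ultimately show "y \<in> f -` B \<inter> K1" using \<open>y \<in> A \<inter> K1\<close> by auto
    next
      fix y assume "y \<in> f -` B \<inter> K1"
      then obtain U x where Ux: "unitary_mat U" "x \<in> K0" "y = act U x" "f y \<in> B"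
        by (auto simp: K1_def)
      then have "f y = F (U,x)" using eqv by (simp add: equivariant_def F_def)
      then have "(U,x) \<in> G" using Ux by (auto simp: G_def)
      then show "y \<in> A \<inter> K1" using Ux \<open>y \<in> f -` B \<inter> K1\<close> by (force simp: A_def)
    qed
    then show "\<exists>A. closed A \<and> A \<inter> K1 = f -` B \<inter> K1" using clA by blast
  qed
qed


lemma lc_space:
  assumes "locally compact (UNIV :: 'a::topological_space set)"
  shows "locally_compact_space (euclidean :: 'a topology)"
  unfolding locally_compact_space_def
proof (intro ballI)
  fix x :: 'a
  have "openin (top_of_set UNIV) (UNIV::'a set)" by simp
  then obtain u v where "openin (top_of_set UNIV) u" "compact v" "x \<in> u" "u \<subseteq> v"
    using assms unfolding locally_def by (meson UNIV_I)
  then show "\<exists>U K. openin euclidean U \<and> compactin euclidean K \<and> x \<in> U \<and> U \<subseteq> K"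
    by (metis compactin_euclidean_iff subtopology_UNIV)
qed

lemma t2_Hausdorff: "Hausdorff_space (euclidean :: 'a::t2_space topology)"
  unfolding Hausdorff_space_def
  by (metis disjnt_def hausdorff open_openin)

lemma extension:
  fixes K :: "'a::t2_space set" and f :: "'a \<Rightarrow> complex^'n^'n"
  assumes lc: "locally compact (UNIV :: 'a set)" and K: "compact K" and fc: "continuous_on K f"
    and fb: "\<And>x. x \<in> K \<Longrightarrow> opnorm (f x) \<le> M" and M: "M \<ge> 0"
  shows "\<exists>g. continuous_on UNIV g \<and> (\<forall>x\<in>K. g x = f x) \<and> (\<forall>x. opnorm (g x) \<le> M) \<and>
             (\<exists>C. compact C \<and> (\<forall>x. x \<notin> C \<longrightarrow> g x = 0))"
proof (cases "M = 0")
  case True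
  have "f x = 0" if "x \<in> K" for x
    using fb[OF that] opnorm_nonneg[of "f x"] True opnorm_eq_0 by (metis order_antisym)
  then show ?thesis
    by (intro exI[of _ "\<lambda>_. 0"]) (auto simp: opnorm_def onorm_zero True intro!: exI[of _ "{}"])
next
  case False
  then have M0: "M > 0" using M by simp
  have lcs: "locally_compact_space (euclidean :: 'a topology)" using lc by (rule lc_space)
  have Hs: "Hausdorff_space (euclidean :: 'a topology)" by (rule t2_Hausdorff)
  have crs: "completely_regular_space (euclidean :: 'a topology)"
    using lcs Hs by (intro locally_compact_regular_imp_completely_regular_space) auto
  have Kc: "compactin euclidean K" using K by (simp add: compactin_euclidean_iff)
  have "\<forall>b\<in>(Basis :: (complex^'n^'n) set). \<exists>h. continuous_on UNIV h \<and> (\<forall>x\<in>K. h x = f x \<bullet> b)"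
  proof
    fix b :: "complex^'n^'n" assume "b \<in> Basis"
    have "continuous_map (subtopology euclidean K) euclideanreal (\<lambda>x. f x \<bullet> b)"
      using fc by (simp add: continuous_intros)
    then obtain h where "continuous_map euclidean euclideanreal h" "\<And>x. x \<in> K \<Longrightarrow> h x = f x \<bullet> b"
      using Tietze_extension_completely_regular[OF crs Kc, of UNIV "\<lambda>x. f x \<bullet> b"]
      by (auto simp: is_interval_univ)
    then show "\<exists>h. continuous_on UNIV h \<and> (\<forall>x\<in>K. h x = f x \<bullet> b)" by auto
  qed
  then obtain h where h: "\<And>b. b \<in> Basis \<Longrightarrow> continuous_on UNIV (h b)"
      "\<And>b x. b \<in> Basis \<Longrightarrow> x \<in> K \<Longrightarrow> h b x = f x \<bullet> b"
    by metis
  define h0 where "h0 x = (\<Sum>b\<in>Basis. h b x *\<^sub>R b)" for x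
  have ch0: "continuous_on UNIV h0" unfolding h0_def by (intro continuous_intros h) auto
  have h0K: "h0 x = f x" if "x \<in> K" for x
    unfolding h0_def using that h(2) by (simp add: euclidean_representation)
  define r where "r B = (M / max M (opnorm B)) *\<^sub>R B" for B :: "complex^'n^'n"
  have cr: "continuous_on UNIV r"
    unfolding r_def using M0
    by (intro continuous_intros continuous_on_divide continuous_on_max continuous_on_opnorm) auto
  have rb: "opnorm (r B) \<le> M" for B
  proof -
    have "opnorm (r B) = (M / max M (opnorm B)) * opnorm B"
      using M0 by (simp add: r_def opnorm_scaleR)
    also have "\<dots> \<le> M" using M0 opnorm_nonneg[of B]
      by (simp add: divide_le_eq field_simps)
    finally show ?thesis .
  qed
  have rid: "r B = B" if "opnorm B \<le> M" for B using that M0 by (simp add: r_def max_def)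
  obtain U L where UL: "openin euclidean U" "compactin euclidean L" "closedin euclidean L" "K \<subseteq> U" "U \<subseteq> L"
    using locally_compact_space_compact_closed_compact[of euclidean] lcs Hs Kc by blast
  have "closedin euclidean (UNIV - U)" using UL(1) by (simp add: closedin_def Diff_Diff_Int)
  moreover have "disjnt K (UNIV - U)" using UL(4) by (auto simp: disjnt_def)
  ultimately obtain \<phi> :: "'a \<Rightarrow> real" where \<phi>: "continuous_map euclidean (subtopology euclidean {0..1}) \<phi>"
      "\<phi> ` (UNIV - U) \<subseteq> {0}" "\<phi> ` K \<subseteq> {1}"
    using Urysohn_completely_regular_compact_closed[of 0 1 euclidean K "UNIV - U"] crs Kc by auto
  have c\<phi>: "continuous_on UNIV \<phi>" and \<phi>01: "\<And>x. \<phi> x \<in> {0..1}"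
    using \<phi>(1) by (auto simp: continuous_map_in_subtopology)
  define g where "g x = \<phi> x *\<^sub>R r (h0 x)" for x
  show ?thesis
  proof (intro exI conjI ballI allI impI)
    show "continuous_on UNIV g" unfolding g_def
      by (intro continuous_intros c\<phi> continuous_on_compose2[OF cr ch0]) auto
    fix x
    show "opnorm (g x) \<le> M"
    proof -
      have "opnorm (g x) = \<bar>\<phi> x\<bar> * opnorm (r (h0 x))" by (simp add: g_def opnorm_scaleR)
      also have "\<dots> \<le> 1 * M" using \<phi>01[of x] rb[of "h0 x"] opnorm_nonneg[of "r (h0 x)"]
        by (intro mult_mono) auto
      finally show ?thesis by simp
    qed
  next
    fix x assume "x \<in> K"
    then show "g x = f x" using \<phi>(3) h0K rid fb by (auto simp: g_def)
  next
    show "compact L" using UL(2) by (simp add: compactin_euclidean_iff)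
    fix x assume "x \<notin> L"
    then have "x \<in> UNIV - U" using UL(5) by auto
    then show "g x = 0" using \<phi>(2) by (auto simp: g_def)
  qed
qed

lemma mmult_zero_right[simp]: "(A::complex^'n^'n) ** (0::complex^'n^'n) = 0"
  by (simp add: vec_eq_iff matrix_matrix_mult_def)

lemma mmult_zero_left[simp]: "(0::complex^'n^'n) ** (A::complex^'n^'n) = 0"
  by (simp add: vec_eq_iff matrix_matrix_mult_def)

lemma opnorm_zero[simp]: "opnorm (0::complex^'n^'n) = 0"
proof -
  have "opnorm (0::complex^'n^'n) \<le> 0"
    by (rule opnorm_le) (simp add: matrix_vector_mult_def vec_eq_iff)
  then show ?thesis using opnorm_nonneg[of "0::complex^'n^'n"] by linarith
qed

lemma norm_cadj: "norm (cadj (A::complex^'n^'n)) = norm A"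
proof -
  have "(norm (cadj A))^2 = (\<Sum>i\<in>UNIV. (norm (cadj A $ i))^2)"
    by (simp add: norm_vec_def L2_set_def sum_nonneg)
  also have "\<dots> = (\<Sum>i\<in>UNIV. (norm (column i A))^2)"
    by (simp add: norm_vec_def L2_set_def sum_nonneg column_def)
  also have "\<dots> = (norm A)^2" by (rule norm_sq_columns[symmetric])
  finally show ?thesis by (simp add: power2_eq_iff_nonneg)
qed

lemma norm_conj_unitary:
  assumes "unitary_mat W" shows "norm (W ** (B::complex^'n^'n) ** cadj W) = norm B"
proof -
  have "norm (W ** B ** cadj W) = norm (B ** cadj W)"
    using assms by (simp add: matrix_mul_assoc[symmetric] norm_unitary_mat)
  also have "\<dots> = norm (cadj (B ** cadj W))" by (simp add: norm_cadj)
  also have "cadj (B ** cadj W) = W ** cadj B" by (simp add: cadj_mult)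
  also have "norm (W ** cadj B) = norm B" using assms by (simp add: norm_unitary_mat norm_cadj)
  finally show ?thesis .
qed

lemma mmult_add_rdistrib: "((A::complex^'n^'n) + B) ** (C::complex^'n^'n) = A ** C + B ** C"
  by (simp add: vec_eq_iff matrix_matrix_mult_def distrib_right sum.distrib)

lemma conj_scaleR: "(V::complex^'n^'n) ** (r *\<^sub>R B) ** cadj V = r *\<^sub>R (V ** (B::complex^'n^'n) ** cadj V)"
  by (simp add: vec_eq_iff matrix_matrix_mult_def scaleR_sum_right sum_distrib_left mult_ac)

lemma bl_conj:
  assumes "unitary_mat V" shows "bounded_linear (\<lambda>B::complex^'n^'n. V ** B ** cadj V)"
proof (rule bounded_linear_intro[where K=1])
  fix B C :: "complex^'n^'n"
  show "V ** (B + C) ** cadj V = V ** B ** cadj V + V ** C ** cadj V"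
    by (simp add: matrix_add_ldistrib mmult_add_rdistrib)
next
  fix r and B :: "complex^'n^'n"
  show "V ** (r *\<^sub>R B) ** cadj V = r *\<^sub>R (V ** B ** cadj V)"
    by (simp add: vec_eq_iff matrix_matrix_mult_def scaleR_sum_right sum_distrib_left mult_ac)
next
  fix B :: "complex^'n^'n"
  show "norm (V ** B ** cadj V) \<le> norm B * 1" using assms by (simp add: norm_conj_unitary)
qed

lemma bl_mvec: "bounded_linear (\<lambda>B::complex^'n^'n. B *v v)"
proof (rule bounded_linear_intro[where K="real CARD('n) * real CARD('n) * norm v"])
  fix B C :: "complex^'n^'n"
  show "(B + C) *v v = B *v v + C *v v" by (simp add: matrix_vector_mult_add_rdistrib)
next
  fix r and B :: "complex^'n^'n"
  show "(r *\<^sub>R B) *v v = r *\<^sub>R (B *v v)" by (rule scaleR_mvec)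
next
  fix B :: "complex^'n^'n"
  have "norm (B *v v) \<le> opnorm B * norm v" by (rule opnorm_mult_vec)
  also have "\<dots> \<le> (real CARD('n) * real CARD('n) * norm B) * norm v"
    by (intro mult_right_mono opnorm_le_norm) simp
  finally show "norm (B *v v) \<le> norm B * (real CARD('n) * real CARD('n) * norm v)"
    by (simp add: mult_ac)
qed

lemma integral_norm_le_const:
  fixes f :: "'b \<Rightarrow> 'c::{banach,second_countable_topology}"
  assumes "finite_measure M" "integrable M f" "\<And>x. x \<in> space M \<Longrightarrow> norm (f x) \<le> B"
  shows "norm (integral\<^sup>L M f) \<le> measure M (space M) * B"
proof -
  interpret finite_measure M by fact
  have "norm (integral\<^sup>L M f) \<le> (\<integral>x. norm (f x) \<partial>M)" by (rule integral_norm_bound)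
  also have "\<dots> \<le> (\<integral>x. B \<partial>M)"
    using assms(2,3) by (intro integral_mono) auto
  also have "\<dots> = measure M (space M) * B" by simp
  finally show ?thesis .
qed

lemma tube:
  fixes \<Psi> :: "'u::metric_space \<times> 'a::topological_space \<Rightarrow> 'v::metric_space"
  assumes K: "compact K" and c: "continuous_on (K \<times> UNIV) \<Psi>" and e: "e > 0"
  shows "\<exists>N. open N \<and> x0 \<in> N \<and> (\<forall>x\<in>N. \<forall>W\<in>K. dist (\<Psi> (W,x)) (\<Psi> (W,x0)) < e)"
proof -
  have "\<forall>W\<in>K. \<exists>A B. open A \<and> open B \<and> W \<in> A \<and> x0 \<in> B \<and>
           (\<forall>W'\<in>K. \<forall>x\<in>B. W' \<in> A \<longrightarrow> dist (\<Psi> (W',x)) (\<Psi> (W,x0)) < e/2)"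
  proof
    fix W assume W: "W \<in> K"
    obtain Op where Op: "open Op" "(W,x0) \<in> Op" "\<forall>y\<in>K \<times> UNIV. y \<in> Op \<longrightarrow> \<Psi> y \<in> ball (\<Psi> (W,x0)) (e/2)"
      using c W e unfolding continuous_on_topological
      by (metis UNIV_I centre_in_ball half_gt_zero mem_Sigma_iff open_ball)
    obtain A B where AB: "open A" "open B" "W \<in> A" "x0 \<in> B" "A \<times> B \<subseteq> Op"
      using open_prod_elim[OF Op(1,2)] by (metis mem_Sigma_iff)
    show "\<exists>A B. open A \<and> open B \<and> W \<in> A \<and> x0 \<in> B \<and>
           (\<forall>W'\<in>K. \<forall>x\<in>B. W' \<in> A \<longrightarrow> dist (\<Psi> (W',x)) (\<Psi> (W,x0)) < e/2)"
      using AB Op(3) by (intro exI[of _ A] exI[of _ B]) (force simp: dist_commute)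
  qed
  then obtain A B where AB: "\<And>W. W \<in> K \<Longrightarrow> open (A W) \<and> open (B W) \<and> W \<in> A W \<and> x0 \<in> B W \<and>
           (\<forall>W'\<in>K. \<forall>x\<in>B W. W' \<in> A W \<longrightarrow> dist (\<Psi> (W',x)) (\<Psi> (W,x0)) < e/2)"
    by metis
  obtain D where D: "D \<subseteq> K" "finite D" "K \<subseteq> (\<Union>W\<in>D. A W)"
    using compactE_image[OF K, of K A] AB by blast
  define N where "N = (\<Inter>W\<in>D. B W)"
  show ?thesis
  proof (intro exI conjI ballI)
    show "open N" unfolding N_def using D AB by (intro open_INT) auto
    show "x0 \<in> N" unfolding N_def using D AB by auto
    fix x W' assume x: "x \<in> N" and W': "W' \<in> K"
    then obtain W where W: "W \<in> D" "W' \<in> A W" using D by auto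
    have "x \<in> B W" "x0 \<in> B W" using x W D AB by (auto simp: N_def)
    then have "dist (\<Psi> (W',x)) (\<Psi> (W,x0)) < e/2" "dist (\<Psi> (W',x0)) (\<Psi> (W,x0)) < e/2"
      using AB[of W] W D W' by auto
    then show "dist (\<Psi> (W',x)) (\<Psi> (W',x0)) < e"
      using dist_triangle[of "\<Psi> (W',x)" "\<Psi> (W',x0)" "\<Psi> (W,x0)"] dist_commute[of "\<Psi> (W',x0)" "\<Psi> (W,x0)"]
      by linarith
  qed
qed


lemma averaging:
  fixes act :: "complex^'n^'n \<Rightarrow> 'a::t2_space \<Rightarrow> 'a" and g f :: "'a \<Rightarrow> complex^'n^'n"
    and H :: "(complex^'n^'n) measure"
  assumes act: "n_space_action act"
    and Hs: "sets H = sets borel" and Hf: "finite_measure H" and Hp: "emeasure H (space H) > 0"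
    and HU: "AE W in H. unitary_mat W"
    and Hi: "\<And>V. unitary_mat V \<Longrightarrow> distr H borel (\<lambda>W. V ** W) = H"
    and gc: "continuous_on UNIV g" and gb: "\<And>x. opnorm (g x) \<le> M"
    and C: "compact C" and gC: "\<And>x. x \<notin> C \<Longrightarrow> g x = 0"
    and eqv: "equivariant act f"
    and K1: "\<And>W y. unitary_mat W \<Longrightarrow> y \<in> K1 \<Longrightarrow> act W y \<in> K1"
    and gf: "\<And>x. x \<in> K1 \<Longrightarrow> g x = f x"
  shows "\<exists>g'. continuous_on UNIV g' \<and> equivariant act g' \<and> (\<forall>x. opnorm (g' x) \<le> M) \<and>
              (\<forall>x\<in>K1. g' x = f x) \<and> (\<exists>C'. compact C' \<and> (\<forall>x. x \<notin> C' \<longrightarrow> g' x = 0))"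
proof -
  interpret finite_measure H by (rule Hf)
  note P = act_props[OF act]
  let ?Un = "{U::complex^'n^'n. unitary_mat U}"
  have spH: "space H = UNIV" using Hs by (metis sets_eq_imp_space_eq space_borel)
  define c where "c = measure H (space H)"
  have c: "c > 0" using Hp by (simp add: c_def emeasure_eq_measure)
  define \<Psi> where "\<Psi> p = fst p ** g (act (cadj (fst p)) (snd p)) ** cadj (fst p)"
    for p :: "(complex^'n^'n) \<times> 'a"
  have c\<Psi>: "continuous_on (?Un \<times> UNIV) \<Psi>"
  proof -
    have "continuous_on (?Un \<times> UNIV) (\<lambda>p. act (cadj (fst p)) (snd p))"
      by (rule continuous_on_act_comp[OF act]) (auto intro!: continuous_intros simp: unitary_cadj)
    then have "continuous_on (?Un \<times> UNIV) (\<lambda>p. g (act (cadj (fst p)) (snd p)))"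
      by (rule continuous_on_compose2[OF gc]) auto
    then show ?thesis unfolding \<Psi>_def by (intro continuous_intros)
  qed
  define F where "F W x = (if unitary_mat W then \<Psi> (W,x) else 0)" for W x
  have Fm: "(\<lambda>W. F W x) \<in> borel_measurable H" for x
  proof -
    have "continuous_on ?Un (\<lambda>W. \<Psi> (W,x))"
      by (rule continuous_on_compose2[OF c\<Psi>]) (auto intro!: continuous_intros)
    then have "(\<lambda>W. if W \<in> ?Un then \<Psi> (W,x) else 0) \<in> borel_measurable borel"
      using closed_unitary by (intro borel_measurable_continuous_on_if) (auto intro: continuous_intros borel_closed)
    then show ?thesis unfolding F_def measurable_cong_sets[OF Hs refl] by simp
  qed
  obtain Bd where Bd: "\<And>x. norm (g x) \<le> Bd"
  proof -
    have "compact (g ` C)" using C gc by (intro compact_continuous_image) (auto intro: continuous_on_subset)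
    then obtain Bd where "\<forall>y\<in>g ` C. norm y \<le> Bd" using compact_imp_bounded bounded_iff by metis
    then have B: "norm (g y) \<le> Bd" if "y \<in> C" for y using that by blast
    have "norm (g x) \<le> max Bd 0" for x
    proof (cases "x \<in> C")
      case True then show ?thesis using B[of x] by linarith
    next
      case False then show ?thesis using gC[of x] by simp
    qed
    then show ?thesis by (rule that)
  qed
  have Bd0: "0 \<le> Bd" using Bd[of undefined] norm_ge_zero order_trans by blast
  have Fb: "norm (F W x) \<le> Bd" for W x
  proof (cases "unitary_mat W")
    case True
    then have "norm (F W x) = norm (g (act (cadj W) x))" by (simp add: F_def \<Psi>_def norm_conj_unitary)
    then show ?thesis using Bd by simp
  next
    case False then show ?thesis using Bd0 by (simp add: F_def)
  qed
  have Fi: "integrable H (\<lambda>W. F W x)" for x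
    by (rule integrable_const_bound[where B=Bd]) (use Fb Fm in auto)
  define g' where "g' x = (1/c) *\<^sub>R (\<integral>W. F W x \<partial>H)" for x
  have Feq: "F (V ** W) (act V x) = V ** F W x ** cadj V" if V: "unitary_mat V" for V W x
  proof (cases "unitary_mat W")
    case True
    have VW: "unitary_mat (V ** W)" using V True by (rule unitary_mult)
    have "act (cadj (V ** W)) (act V x) = act (cadj W) x"
    proof -
      have "act (cadj (V ** W)) (act V x) = act (cadj W ** cadj V) (act V x)" by (simp add: cadj_mult)
      also have "\<dots> = act (cadj W) (act (cadj V) (act V x))"
        using P(2) True V unitary_cadj by blast
      also have "\<dots> = act (cadj W) x" using act_inv[OF act V] by simp
      finally show ?thesis .
    qed
    then show ?thesis using True VW by (simp add: F_def \<Psi>_def cadj_mult matrix_mul_assoc)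
  next
    case False
    have "\<not> unitary_mat (V ** W)"
    proof
      assume "unitary_mat (V ** W)"
      then have "unitary_mat (cadj V ** (V ** W))" using V unitary_cadj unitary_mult by blast
      moreover have "cadj V ** (V ** W) = W" using V by (simp add: matrix_mul_assoc unitary_mat_left)
      ultimately show False using False by simp
    qed
    then show ?thesis using False by (simp add: F_def)
  qed
  have Vm: "(\<lambda>W::complex^'n^'n. V ** W) \<in> borel_measurable borel" for V :: "complex^'n^'n"
  proof -
    have "continuous_on UNIV (\<lambda>W::complex^'n^'n. V ** W)"
      using continuous_on_mmult[of UNIV "\<lambda>_. V" "\<lambda>W. W"] by (simp add: continuous_on_const continuous_on_id)
    then show ?thesis by (rule borel_measurable_continuous_onI)
  qed
  have equiv: "equivariant act g'"
    unfolding equivariant_def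
  proof (intro allI impI)
    fix V :: "complex^'n^'n" and x assume V: "unitary_mat V"
    have Fm': "(\<lambda>W. F W y) \<in> borel_measurable borel" for y
      using Fm[of y] by (simp add: measurable_cong_sets[OF Hs refl])
    have "(\<integral>W. F W (act V x) \<partial>H) = (\<integral>W. F W (act V x) \<partial>(distr H borel (\<lambda>W. V ** W)))"
      by (simp add: Hi[OF V])
    also have "\<dots> = (\<integral>W. F (V ** W) (act V x) \<partial>H)"
      by (rule integral_distr) (use Vm[of V] Fm' in \<open>auto simp: measurable_cong_sets[OF Hs refl]\<close>)
    also have "\<dots> = (\<integral>W. V ** F W x ** cadj V \<partial>H)" by (simp add: Feq[OF V])
    also have "\<dots> = V ** (\<integral>W. F W x \<partial>H) ** cadj V"
      by (rule integral_bounded_linear[OF bl_conj[OF V] Fi])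
    finally have "(\<integral>W. F W (act V x) \<partial>H) = V ** (\<integral>W. F W x \<partial>H) ** cadj V" .
    then show "g' (act V x) = V ** g' x ** cadj V"
      unfolding g'_def by (simp add: conj_scaleR)
  qed
  have onK: "g' x = f x" if x: "x \<in> K1" for x
  proof -
    have "AE W in H. F W x = f x"
      using HU
    proof eventually_elim
      fix W :: "complex^'n^'n" assume W: "unitary_mat W"
      have "act (cadj W) x \<in> K1" using K1[OF unitary_cadj[OF W] x] .
      then have "g (act (cadj W) x) = cadj W ** f x ** W"
        using gf eqv unitary_cadj[OF W] act_inv[OF act W] unfolding equivariant_def by simp
      then show "F W x = f x"
        using W by (simp add: F_def \<Psi>_def matrix_mul_assoc unitary_mat_def)
          (simp add: matrix_mul_assoc[symmetric] unitary_mat_def)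
    qed
    then have "(\<integral>W. F W x \<partial>H) = (\<integral>W. f x \<partial>H)"
      by (intro integral_cong_AE) (auto simp: Fm)
    also have "\<dots> = c *\<^sub>R f x" by (simp add: c_def)
    finally show ?thesis using c by (simp add: g'_def)
  qed
  have bound: "opnorm (g' x) \<le> M" for x
  proof -
    have M0: "M \<ge> 0" using gb[of x] opnorm_nonneg[of "g x"] by linarith
    have FbM: "opnorm (F W x) \<le> M" for W
      using gb[of "act (cadj W) x"] M0 by (auto simp: F_def \<Psi>_def opnorm_conj)
    have "opnorm (\<integral>W. F W x \<partial>H) \<le> c * M"
    proof (rule opnorm_le)
      fix v
      have "(\<integral>W. F W x \<partial>H) *v v = (\<integral>W. F W x *v v \<partial>H)"
        by (rule integral_bounded_linear[OF bl_mvec Fi, symmetric])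
      moreover have "integrable H (\<lambda>W. F W x *v v)"
        by (rule integrable_bounded_linear[OF bl_mvec Fi])
      moreover have "norm (F W x *v v) \<le> M * norm v" for W
        using opnorm_mult_vec[of "F W x" v] FbM[of W]
        by (meson mult_right_mono norm_ge_zero order_trans)
      ultimately have "norm ((\<integral>W. F W x \<partial>H) *v v) \<le> c * (M * norm v)"
        unfolding c_def by (metis Hf integral_norm_le_const)
      then show "norm ((\<integral>W. F W x \<partial>H) *v v) \<le> c * M * norm v" by (simp add: mult_ac)
    qed
    then show ?thesis using c by (simp add: g'_def opnorm_scaleR field_simps)
  qed
  define C' where "C' = (\<lambda>(U,x). act U x) ` (?Un \<times> C)"
  have cC': "compact C'"
    unfolding C'_def using compact_Times[OF compact_unitary C]
    by (intro compact_continuous_image continuous_on_subset[OF P(3)]) auto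
  have van: "g' x = 0" if x: "x \<notin> C'" for x
  proof -
    have "F W x = 0" for W
    proof (cases "unitary_mat W")
      case True
      have "act (cadj W) x \<notin> C"
      proof
        assume "act (cadj W) x \<in> C"
        then have "act W (act (cadj W) x) \<in> C'" using True by (force simp: C'_def)
        then show False using x act_inv[OF act True] by simp
      qed
      then show ?thesis using True gC by (simp add: F_def \<Psi>_def)
    qed (simp add: F_def)
    then show ?thesis by (simp add: g'_def)
  qed
  have cont: "continuous_on UNIV g'"
  proof -
    have "isCont g' x0" for x0
    unfolding isCont_def proof (rule tendstoI)
      fix e :: real assume e: "e > 0"
      obtain N where N: "open N" "x0 \<in> N" "\<forall>x\<in>N. \<forall>W\<in>?Un. dist (\<Psi> (W,x)) (\<Psi> (W,x0)) < e/2"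
        using tube[OF compact_unitary c\<Psi>, of "e/2" x0] e by auto
      have "dist (g' x) (g' x0) < e" if x: "x \<in> N" for x
      proof -
        have Fd: "norm (F W x - F W x0) \<le> e/2" for W
          using N(3) x e by (cases "unitary_mat W") (auto simp: F_def dist_norm less_imp_le)
        have "g' x - g' x0 = (1/c) *\<^sub>R (\<integral>W. F W x - F W x0 \<partial>H)"
          by (simp add: g'_def Fi scaleR_diff_right)
        then have "norm (g' x - g' x0) = (1/c) * norm (\<integral>W. F W x - F W x0 \<partial>H)"
          using c by simp
        also have "\<dots> \<le> (1/c) * (c * (e/2))"
          using c Fd unfolding c_def
          by (intro mult_left_mono integral_norm_le_const[OF Hf]) (auto intro: Fi)
        also have "\<dots> < e" using c e by simp
        finally show ?thesis by (simp add: dist_norm)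
      qed
      then show "\<forall>\<^sub>F x in at x0. dist (g' x) (g' x0) < e"
        unfolding eventually_at_topological using N by blast
    qed
    then show ?thesis by (simp add: continuous_on_eq_continuous_at)
  qed
  show ?thesis
    using cont equiv bound onK cC' van by blast
qed

theorem lemma4p7:
  fixes act :: "complex^'n^'n \<Rightarrow> 'a::t2_space \<Rightarrow> 'a"
    and \<mu> :: "'a measure"
    and f :: "'a \<Rightarrow> complex^'n^'n"
    and \<epsilon> :: real
  assumes "locally compact (UNIV :: 'a set)"
    and "n_space_action act"
    and "regular_borel_measure \<mu>"
    and "f \<in> BCstar act"
    and "\<epsilon> > 0"
  shows "\<exists>g \<in> Cstar act.
           (SUP x. opnorm (g x)) \<le> (SUP x. opnorm (f x)) \<and>
           (\<integral>x. opnorm (f x - g x) \<partial>\<mu>) < \<epsilon>"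
proof -
  note lc = assms(1) and act = assms(2) and eps = assms(5)
  have sets: "sets \<mu> = sets borel" and fin: "finite_measure \<mu>"
    and reg: "\<forall>A\<in>sets borel. emeasure \<mu> A = (SUP K \<in> {K. K \<subseteq> A \<and> compact K}. emeasure \<mu> K)"
    using assms(3) unfolding regular_borel_measure_def by auto
  interpret finite_measure \<mu> by (rule fin)
  have fm: "f \<in> borel_measurable borel" and fbd: "bounded (range f)" and eqv: "equivariant act f"
    using assms(4) unfolding BCstar_def by auto
  obtain Bd where Bd: "\<And>x. norm (f x) \<le> Bd" using fbd unfolding bounded_iff by auto
  define M where "M = (SUP x. opnorm (f x))"
  have bdd: "bdd_above (range (\<lambda>x. opnorm (f x)))"
  proof
    fix y assume "y \<in> range (\<lambda>x. opnorm (f x))"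
    then obtain x where "y = opnorm (f x)" by auto
    then show "y \<le> real CARD('n) * real CARD('n) * Bd"
      using opnorm_le_norm[of "f x"] Bd[of x] by (meson mult_left_mono of_nat_0_le_iff order_trans mult_nonneg_nonneg)
  qed
  have fM: "opnorm (f x) \<le> M" for x unfolding M_def using bdd by (intro cSUP_upper) auto
  have M0: "M \<ge> 0" using fM[of undefined] opnorm_nonneg[of "f undefined"] by linarith
  define d where "d = \<epsilon> / (2 * M + 1)"
  have d: "d > 0" using eps M0 by (simp add: d_def)
  obtain K0 where K0: "compact K0" "continuous_on K0 f" "measure \<mu> (UNIV - K0) < d"
    using lusin[OF sets fin reg fm d] by blast
  define K1 where "K1 = (\<lambda>(U,x). act U x) ` ({U. unitary_mat U} \<times> K0)"
  have K1: "compact K1" "K0 \<subseteq> K1" "\<And>W y. unitary_mat W \<Longrightarrow> y \<in> K1 \<Longrightarrow> act W y \<in> K1"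
    "continuous_on K1 f"
    using saturate[OF act eqv K0(1,2)] unfolding K1_def by auto
  obtain g C where g: "continuous_on UNIV g" "\<And>x. x \<in> K1 \<Longrightarrow> g x = f x" "\<And>x. opnorm (g x) \<le> M"
    "compact C" "\<And>x. x \<notin> C \<Longrightarrow> g x = 0"
    using extension[OF lc K1(1) K1(4) fM M0] by blast
  obtain H :: "(complex^'n^'n) measure" where H: "sets H = sets borel" "finite_measure H"
    "emeasure H (space H) > 0" "AE W in H. unitary_mat W"
    "\<And>V. unitary_mat V \<Longrightarrow> distr H borel (\<lambda>W. V ** W) = H"
    using haar_exists by blast
  obtain g' C' where g': "continuous_on UNIV g'" "equivariant act g'" "\<And>x. opnorm (g' x) \<le> M"
    "\<And>x. x \<in> K1 \<Longrightarrow> g' x = f x" "compact C'" "\<And>x. x \<notin> C' \<Longrightarrow> g' x = 0"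
    using averaging[OF act H(1,2,3,4) H(5) g(1) g(3) g(4) g(5) eqv K1(3) g(2)] by blast
  have inC: "g' \<in> Cstar act"
    unfolding Cstar_def
  proof (intro CollectI conjI allI impI)
    fix e :: real assume "e > 0"
    then show "\<exists>K. compact K \<and> (\<forall>x. x \<notin> K \<longrightarrow> opnorm (g' x) < e)"
      using g'(5,6) by auto
  qed (use g' in auto)
  have sup: "(SUP x. opnorm (g' x)) \<le> M"
    by (rule cSUP_least) (use g'(3) in auto)
  have spm: "space \<mu> = UNIV" using sets by (metis sets_eq_imp_space_eq space_borel)
  have K1b: "K1 \<in> sets \<mu>" using K1(1) sets by (simp add: compact_imp_closed borel_closed)
  have K0b: "K0 \<in> sets \<mu>" using K0(1) sets by (simp add: compact_imp_closed borel_closed)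
  have cK1: "UNIV - K1 \<in> sets \<mu>" using sets.compl_sets[OF K1b] spm by simp
  have cK0: "UNIV - K0 \<in> sets \<mu>" using sets.compl_sets[OF K0b] spm by simp
  have hm: "(\<lambda>x. opnorm (f x - g' x)) \<in> borel_measurable \<mu>"
  proof -
    have "(\<lambda>x. f x - g' x) \<in> borel_measurable borel"
      using fm borel_measurable_continuous_onI[OF g'(1)] by (rule borel_measurable_diff)
    then have "(\<lambda>x. opnorm (f x - g' x)) \<in> borel_measurable borel"
      by (rule borel_measurable_continuous_on[OF continuous_on_opnorm])
    then show ?thesis by (simp add: measurable_cong_sets[OF sets refl])
  qed
  have hb: "opnorm (f x - g' x) \<le> 2 * M * indicator (UNIV - K1) x" for x
  proof (cases "x \<in> K1")
    case True then show ?thesis using g'(4) by simp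
  next
    case False
    then show ?thesis using opnorm_diff[of "f x" "g' x"] fM[of x] g'(3)[of x] by simp
  qed
  have hb2: "norm (opnorm (f x - g' x)) \<le> 2 * M" for x
    using hb[of x] opnorm_nonneg[of "f x - g' x"] M0 by (cases "x \<in> K1") auto
  have hi: "integrable \<mu> (\<lambda>x. opnorm (f x - g' x))"
    by (rule integrable_const_bound[where B="2*M"]) (use hm hb2 in auto)
  have ii: "integrable \<mu> (\<lambda>x. 2 * M * indicator (UNIV - K1) x)"
    using cK1 by (intro integrable_mult_right integrable_real_indicator) (auto simp: emeasure_eq_measure)
  have "(\<integral>x. opnorm (f x - g' x) \<partial>\<mu>) \<le> (\<integral>x. 2 * M * indicator (UNIV - K1) x \<partial>\<mu>)"
    by (rule integral_mono[OF hi ii hb])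
  also have "\<dots> = 2 * M * measure \<mu> (UNIV - K1)"
    using cK1 by simp
  also have "\<dots> \<le> 2 * M * measure \<mu> (UNIV - K0)"
    using K1(2) cK0 M0 by (intro mult_left_mono finite_measure_mono) auto
  also have "\<dots> \<le> 2 * M * d" using K0(3) M0 by (intro mult_left_mono) auto
  also have "\<dots> < \<epsilon>"
  proof -
    have "2 * M * d = \<epsilon> * (2 * M / (2 * M + 1))" using M0 by (simp add: d_def field_simps)
    also have "\<dots> < \<epsilon> * 1" using eps M0 by (intro mult_strict_left_mono) auto
    finally show ?thesis by simp
  qed
  finally have "(\<integral>x. opnorm (f x - g' x) \<partial>\<mu>) < \<epsilon>" .
  then show ?thesis using inC sup unfolding M_def by blast
qed

end
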